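(* Let $N\ge2$, $\alpha,\beta>-1$, let $\{x_j,\omega_j\}_{j=0}^N$ be the JGL nodes and weights, and let $Q_j^\mu$ be the Caputo fractional Birkhoff basis polynomials defined below. (i) For $\mu\in(0,1)$ and $1\le j\le N$, $$ Q_j^\mu(x)=\frac{1}{(1+x_j)^{1-\mu}}\sum_{l=0}^{N-1}\frac{\Gamma(l-\mu+2)}{l!}\,\breve\xi_{lj}\int_{-1}^xP_l(t)\,dt, $$ where $\breve\xi_{lj}=\sum_{n=l}^{N-1}{}^{(\alpha,\beta)}C^{(\mu-1,1-\mu)}_{ln}\,\xi_{nj}$ and $$ \xi_{nj}=\frac{1}{\gamma_n^{(\alpha,\beta)}}\Big\{-\frac{c_j}{\beta+1}\frac{P_N^{(\alpha,\beta)}(-1)}{P_N^{(\alpha,\beta)}(x_j)}P_n^{(\alpha,\beta)}(-1)\,\omega_0+P_n^{(\alpha,\beta)}(x_j)\,\omega_j\Big\}, $$ with $c_j=1$ for $1\le j\le N-1$ and $c_N=\alpha+1$. (ii) For $\mu\in(1,2)$ and $1\le j\le N-1$, $$ Q_j^\mu(x)=\frac{1}{(1+x_j)^{2-\mu}}\sum_{l=0}^{N-2}\frac{\Gamma(l-\mu+3)}{l!}\,\breve\xi_{lj}\,\Phi_l(x), $$ where $\breve\xi_{lj}=\sum_{n=l}^{N-2}{}^{(\alpha,\beta)}C^{(\mu-2,2-\mu)}_{ln}\,\xi_{nj}$, $$ \xi_{nj}=\frac{1}{\gamma_n^{(\alpha,\beta)}}\Big\{\frac{(x_j-1)P_N^{(\alpha,\beta)}(-1)}{2(\beta+1)P_N^{(\alpha,\beta)}(x_j)}P_n^{(\alpha,\beta)}(-1)\,\omega_0-\frac{(1+x_j)P_N^{(\alpha,\beta)}(1)}{2(\alpha+1)P_N^{(\alpha,\beta)}(x_j)}P_n^{(\alpha,\beta)}(1)\,\omega_N+P_n^{(\alpha,\beta)}(x_j)\,\omega_j\Big\},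 $$ and $\Phi_l(x)=\frac{1+x}{2}\int_{-1}^1(t-1)P_l(t)\,dt+\int_{-1}^x(x-t)P_l(t)\,dt$.
   Context: For $\rho>0$, $(I_-^\rho u)(x)=\frac{1}{\Gamma(\rho)}\int_{-1}^x (x-y)^{\rho-1}u(y)\,dy$, $D^k=d^k/dx^k$, and for $\mu\in(k-1,k)$ the Caputo derivative is ${}^C D_-^\mu u=I_-^{k-\mu}(D^k u)$. Caputo fractional Birkhoff basis: for $\mu\in(0,1)$, $Q_j^\mu\in\mathcal P_N$ ($1\le j\le N$) satisfies ${}^C D_-^\mu Q_j^\mu(x_i)=\delta_{ij}$ ($1\le i\le N$) and $Q_j^\mu(-1)=0$; for $\mu\in(1,2)$, $Q_j^\mu\in\mathcal P_N$ ($1\le j\le N-1$) satisfies ${}^C D_-^\mu Q_j^\mu(x_i)=\delta_{ij}$ ($1\le i\le N-1$) and $Q_j^\mu(\pm1)=0$. Jacobi polynomials are in Szegő's normalization: $P_n^{(\alpha,\beta)}(x)=\frac{\Gamma(n+\alpha+1)}{n!\Gamma(\alpha+1)}\,{}_2F_1\big(-n,n+\alpha+\beta+1;\alpha+1;\tfrac{1-x}{2}\big)$, $P_0^{(\alpha,\beta)}=1$, $P_n=P_n^{(0,0)}$. For $\alpha,\beta>-1$, $\gamma_n^{(\alpha,\beta)}=\frac{2^{\alpha+\beta+1}\Gamma(n+\alpha+1)\Gamma(n+\beta+1)}{(2n+\alpha+\beta+1)\,n!\,\Gamma(n+\alpha+\beta+1)}$. Connection coefficients: for $\alpha,\beta,a,b>-1$,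 ${}^{(\alpha,\beta)}C^{(a,b)}_{ln}$ are the unique numbers with $P_n^{(\alpha,\beta)}=\sum_{l=0}^n {}^{(\alpha,\beta)}C^{(a,b)}_{ln}P_l^{(a,b)}$. JGL nodes $x_0<\dots<x_N$ are the zeros of $(1-x^2)\frac{d}{dx}P_N^{(\alpha,\beta)}$ ($x_0=-1$, $x_N=1$) and the weights $\omega_j$ make $\int_{-1}^1\phi(1-x)^\alpha(1+x)^\beta dx=\sum_j\phi(x_j)\omega_j$ exact for $\phi\in\mathcal P_{2N-1}$. *)

theory Defs
  imports "HOL-Analysis.Analysis" "HOL-Computational_Algebra.Polynomial"
begin

text \<open>Jacobi polynomials in Szego's normalisation, via the terminating 2F1 series.\<close>
definition jacobi :: "real \<Rightarrow> real \<Rightarrow> nat \<Rightarrow> real \<Rightarrow> real" where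
  "jacobi a b n x =
     Gamma (real n + a + 1) / (fact n * Gamma (a + 1)) *
     (\<Sum>k\<le>n. pochhammer (- real n) k * pochhammer (real n + a + b + 1) k
               / (pochhammer (a + 1) k * fact k) * ((1 - x) / 2) ^ k)"

definition legendre :: "nat \<Rightarrow> real \<Rightarrow> real" where
  "legendre n = jacobi 0 0 n"

text \<open>Normalisation constants gamma_n^(a,b). For n = 0 the product
  (a+b+1) Gamma(a+b+1) is read as Gamma(a+b+2) (removable singularity at a+b = -1).\<close>
definition jacobi_gamma :: "real \<Rightarrow> real \<Rightarrow> nat \<Rightarrow> real" where
  "jacobi_gamma a b n =
     (if n = 0 then 2 powr (a + b + 1) * Gamma (a + 1) * Gamma (b + 1) / Gamma (a + b + 2)
      else 2 powr (a + b + 1) * Gamma (real n + a + 1) * Gamma (real n + b + 1)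
           / ((2 * real n + a + b + 1) * fact n * Gamma (real n + a + b + 1)))"

definition conn_coeff :: "real \<Rightarrow> real \<Rightarrow> real \<Rightarrow> real \<Rightarrow> nat \<Rightarrow> nat \<Rightarrow> real" where
  "conn_coeff al be a b l n =
     (THE c. (\<forall>x. jacobi al be n x = (\<Sum>i\<le>n. c i * jacobi a b i x)) \<and> (\<forall>i>n. c i = 0)) l"

definition frac_int :: "real \<Rightarrow> (real \<Rightarrow> real) \<Rightarrow> real \<Rightarrow> real" where
  "frac_int \<rho> u x = (1 / Gamma \<rho>) * integral {-1..x} (\<lambda>y. (x - y) powr (\<rho> - 1) * u y)"

definition caputo :: "real \<Rightarrow> (real \<Rightarrow> real) \<Rightarrow> real \<Rightarrow> real" where
  "caputo \<mu> u x = (let k = nat \<lceil>\<mu>\<rceil> in frac_int (real k - \<mu>) ((deriv ^^ k) u) x)"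

definition JGL :: "real \<Rightarrow> real \<Rightarrow> nat \<Rightarrow> (nat \<Rightarrow> real) \<Rightarrow> (nat \<Rightarrow> real) \<Rightarrow> bool" where
  "JGL al be N xs w \<longleftrightarrow>
     strict_mono_on {0..N} xs \<and> xs 0 = -1 \<and> xs N = 1 \<and>
     {t. (1 - t\<^sup>2) * deriv (jacobi al be N) t = 0} = xs ` {0..N} \<and>
     (\<forall>p :: real poly. degree p \<le> 2 * N - 1 \<longrightarrow>
        ((\<lambda>t. poly p t * (1 - t) powr al * (1 + t) powr be) has_integral
           (\<Sum>j\<le>N. poly p (xs j) * w j)) {-1..1})"

definition birkhoff1 :: "real \<Rightarrow> nat \<Rightarrow> (nat \<Rightarrow> real) \<Rightarrow> nat \<Rightarrow> real poly \<Rightarrow> bool" where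
  "birkhoff1 \<mu> N xs j q \<longleftrightarrow> degree q \<le> N \<and>
     (\<forall>i\<in>{1..N}. caputo \<mu> (poly q) (xs i) = (if i = j then 1 else 0)) \<and> poly q (-1) = 0"

definition birkhoff2 :: "real \<Rightarrow> nat \<Rightarrow> (nat \<Rightarrow> real) \<Rightarrow> nat \<Rightarrow> real poly \<Rightarrow> bool" where
  "birkhoff2 \<mu> N xs j q \<longleftrightarrow> degree q \<le> N \<and>
     (\<forall>i\<in>{1..N-1}. caputo \<mu> (poly q) (xs i) = (if i = j then 1 else 0)) \<and>
     poly q (-1) = 0 \<and> poly q 1 = 0"

end

theory Submission
  imports Defs "HOL-Computational_Algebra.Formal_Power_Series"
begin


definition jc :: "real \<Rightarrow> real \<Rightarrow> nat \<Rightarrow> nat \<Rightarrow> real" where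
  "jc a b n k = Gamma (real n + a + 1) / (fact n * Gamma (a + 1)) *
     (pochhammer (- real n) k * pochhammer (real n + a + b + 1) k / (pochhammer (a + 1) k * fact k))"

definition jF :: "real \<Rightarrow> real \<Rightarrow> nat \<Rightarrow> real poly" where
  "jF a b n = (\<Sum>k\<le>n. monom (jc a b n k) k)"

definition jp :: "real \<Rightarrow> real \<Rightarrow> nat \<Rightarrow> real poly" where
  "jp a b n = pcompose (jF a b n) [:1/2, -1/2:]"

lemma jc_zero: "k > n \<Longrightarrow> jc a b n k = 0"
  unfolding jc_def using pochhammer_of_nat_eq_0_lemma[of n k, where 'a=real] by simp

lemma coeff_jF: "coeff (jF a b n) k = jc a b n k"
  unfolding jF_def by (auto simp: coeff_sum jc_zero)

lemma poly_jF: "poly (jF a b n) t = (\<Sum>k\<le>n. jc a b n k * t ^ k)"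
  unfolding jF_def by (simp add: poly_sum poly_monom)

lemma poly_jp: "poly (jp a b n) x = jacobi a b n x"
  unfolding jp_def jacobi_def poly_pcompose poly_jF jc_def
  by (simp add: sum_distrib_left mult_ac diff_divide_distrib)

lemma jacobi_poly: "jacobi a b n = poly (jp a b n)"
  by (simp add: fun_eq_iff poly_jp)

lemma jc_rec:
  assumes a: "a > -1"
  shows "real (Suc k) * (real k + a + 1) * jc a b n (Suc k) =
         (real k - real n) * (real k + real n + a + b + 1) * jc a b n k"
proof -
  have p: "pochhammer (a+1) k > 0" using a by (intro pochhammer_pos) auto
  have q: "real k + a + 1 > 0" using a by simp
  define C where "C = Gamma (real n + a + 1) / (fact n * Gamma (a + 1))"
  define P1 where "P1 = pochhammer (- real n) k"
  define P2 where "P2 = pochhammer (real n + a + b + 1) k"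
  define P3 where "P3 = pochhammer (a + 1) k"
  have e1: "jc a b n (Suc k) = C * (P1 * (- real n + real k)) * (P2 * (real n + a + b + 1 + real k))
     / (P3 * (a + 1 + real k) * (real (Suc k) * fact k))"
    unfolding jc_def C_def P1_def P2_def P3_def pochhammer_rec' fact_Suc by (simp add: mult_ac)
  have e2: "jc a b n k = C * (P1 * P2 / (P3 * fact k))"
    unfolding jc_def C_def P1_def P2_def P3_def by simp
  have P3: "P3 > 0" using p P3_def by simp
  have fk: "fact k > (0::real)" by simp
  have d: "P3 * (a + 1 + real k) * (real (Suc k) * fact k) \<noteq> 0" using P3 q fk by auto
  have e1': "jc a b n (Suc k) * (P3 * (a + 1 + real k) * (real (Suc k) * fact k)) =
       C * (P1 * (- real n + real k)) * (P2 * (real n + a + b + 1 + real k))"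
    using e1 d by (simp add: divide_eq_eq)
  have "(real (Suc k) * (real k + a + 1) * jc a b n (Suc k)) * (P3 * fact k) =
        ((real k - real n) * (real k + real n + a + b + 1) * jc a b n k) * (P3 * fact k)"
  proof -
    have "(real (Suc k) * (real k + a + 1) * jc a b n (Suc k)) * (P3 * fact k) =
          jc a b n (Suc k) * (P3 * (a + 1 + real k) * (real (Suc k) * fact k))"
      by (simp add: algebra_simps)
    also have "\<dots> = C * (P1 * (- real n + real k)) * (P2 * (real n + a + b + 1 + real k))" by (rule e1')
    also have "\<dots> = (real k - real n) * (real k + real n + a + b + 1) * (C * P1 * P2)"
      by (simp add: algebra_simps)
    also have "\<dots> = ((real k - real n) * (real k + real n + a + b + 1) * (C * (P1 * P2 / (P3 * fact k)))) * (P3 * fact k)"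
      using P3 fk by simp
    also have "\<dots> = ((real k - real n) * (real k + real n + a + b + 1) * jc a b n k) * (P3 * fact k)"
      unfolding e2 ..
    finally show ?thesis .
  qed
  then show ?thesis using P3 fk by simp
qed

lemma jc_top_nz:
  assumes a: "a > -1" and b: "b > -1"
  shows "jc a b n n \<noteq> 0"
proof -
  have g1: "Gamma (real n + a + 1) > 0" using a by (intro Gamma_real_pos) auto
  have g2: "Gamma (a + 1) > 0" using a by (intro Gamma_real_pos) auto
  have p1: "pochhammer (a+1) n > 0" using a by (intro pochhammer_pos) auto
  have p2: "pochhammer (- real n) n \<noteq> 0" by (simp add: pochhammer_same)
  have p3: "pochhammer (real n + a + b + 1) n \<noteq> 0"
  proof
    assume "pochhammer (real n + a + b + 1) n = 0"
    then obtain k where "k < n" "real n + a + b + 1 = - of_nat k"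
      by (auto simp: pochhammer_eq_0_iff)
    then show False using a b by linarith
  qed
  show ?thesis unfolding jc_def using g1 g2 p1 p2 p3 by simp
qed

lemma degree_jF: assumes "a > -1" "b > -1" shows "degree (jF a b n) = n"
proof (rule antisym)
  show "degree (jF a b n) \<le> n"
    by (rule degree_le) (simp add: coeff_jF jc_zero)
  show "n \<le> degree (jF a b n)"
    by (rule le_degree) (simp add: coeff_jF jc_top_nz assms)
qed

lemma degree_jp: assumes "a > -1" "b > -1" shows "degree (jp a b n) = n"
  unfolding jp_def by (simp add: degree_pcompose degree_jF assms)

lemma jp_nz: assumes "a > -1" "b > -1" shows "coeff (jp a b n) n \<noteq> 0"
proof -
  have "coeff (jp a b n) n = lead_coeff (jp a b n)" using degree_jp[OF assms] by simp
  also have "\<dots> = lead_coeff (jF a b n) * (-1/2) ^ degree (jF a b n)"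
    unfolding jp_def by (subst lead_coeff_comp) auto
  finally show ?thesis using degree_jF[OF assms] jc_top_nz[OF assms] by (simp add: coeff_jF)
qed

lemma coeff_mult3: "coeff ([:u, v, w:] * G) k =
   u * coeff G k + (if k \<ge> 1 then v * coeff G (k - 1) else 0) + (if k \<ge> 2 then w * coeff G (k - 2) else 0)"
  by (cases k; cases "k - 1") (auto simp: coeff_pCons algebra_simps)

lemma coeff_mult2: "coeff ([:u, v:] * G) k =
   u * coeff G k + (if k \<ge> 1 then v * coeff G (k - 1) else 0)"
  by (cases k) (auto simp: coeff_pCons algebra_simps)

lemma jF_ode:
  assumes a: "a > -1"
  shows "[:0, 1, -1:] * pderiv (pderiv (jF a b n)) + [:a + 1, -(a + b + 2):] * pderiv (jF a b n)
          + smult (real n * (real n + a + b + 1)) (jF a b n) = 0"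
proof (rule poly_eqI)
  fix k
  let ?A = "jc a b n"
  have r: "real (Suc k) * (real k + a + 1) * ?A (Suc k) =
         (real k - real n) * (real k + real n + a + b + 1) * ?A k" by (rule jc_rec[OF a])
  show "coeff ([:0, 1, -1:] * pderiv (pderiv (jF a b n)) + [:a + 1, -(a + b + 2):] * pderiv (jF a b n)
          + smult (real n * (real n + a + b + 1)) (jF a b n)) k = coeff 0 k"
  proof (cases k)
    case 0
    then show ?thesis using r by (simp add: coeff_mult3 coeff_mult2 coeff_pderiv coeff_jF algebra_simps)
  next
    case (Suc m)
    note km = this
    show ?thesis
    proof (cases m)
      case 0
      then show ?thesis using r km
        by (simp add: coeff_mult3 coeff_mult2 coeff_pderiv coeff_jF algebra_simps numeral_2_eq_2)
    next
      case (Suc m')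
      then show ?thesis using r km
        by (simp add: coeff_mult3 coeff_mult2 coeff_pderiv coeff_jF algebra_simps numeral_2_eq_2)
    qed
  qed
qed




lemma jacobi_ode:
  assumes a: "a > -1"
  shows "(1 - x^2) * poly (pderiv (pderiv (jp a b n))) x + (b - a - (a + b + 2) * x) * poly (pderiv (jp a b n)) x
          + real n * (real n + a + b + 1) * poly (jp a b n) x = 0"
proof -
  let ?F = "jF a b n"
  define t where "t = (1 - x) / 2"
  have d1: "pderiv (jp a b n) = pcompose (pderiv ?F) [:1/2, -1/2:] * [:-1/2:]"
    unfolding jp_def by (simp add: pderiv_pcompose pderiv_pCons)
  have d2: "pderiv (pderiv (jp a b n)) = pcompose (pderiv (pderiv ?F)) [:1/2, -1/2:] * [:1/4:]"
    unfolding d1 by (simp add: pderiv_pcompose pderiv_pCons pderiv_mult pderiv_minus pderiv_smult)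
  have e: "poly ([:0, 1, -1:] * pderiv (pderiv ?F) + [:a + 1, -(a + b + 2):] * pderiv ?F
          + smult (real n * (real n + a + b + 1)) ?F) t = 0"
    using jF_ode[OF a, of b n] by simp
  have q0: "poly (jp a b n) x = poly ?F t" unfolding jp_def t_def by (simp add: poly_pcompose diff_divide_distrib)
  have q1: "poly (pderiv (jp a b n)) x = - poly (pderiv ?F) t / 2"
    unfolding d1 t_def by (simp add: poly_pcompose diff_divide_distrib)
  have q2: "poly (pderiv (pderiv (jp a b n))) x = poly (pderiv (pderiv ?F)) t / 4"
    unfolding d2 t_def by (simp add: poly_pcompose diff_divide_distrib)
  have xt: "x = 1 - 2 * t" unfolding t_def by (simp add: field_simps)
  show ?thesis unfolding q0 q1 q2 using e unfolding xt by (simp add: field_simps power2_eq_square)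
qed

definition je :: "real \<Rightarrow> real \<Rightarrow> nat \<Rightarrow> nat \<Rightarrow> real" where
  "je a b n p = (-1) ^ n * Gamma (real n + b + 1) / (fact n * Gamma (b + 1)) *
     (pochhammer (- real n) p * pochhammer (real n + a + b + 1) p / (pochhammer (b + 1) p * fact p))"

lemma je_aux:
  fixes A1 A2 B1 B2 Ga Gb fn fp P1 PM s1 s2 s3 :: real
  assumes "A1 \<noteq> 0" "A2 \<noteq> 0" "B1 \<noteq> 0" "B2 \<noteq> 0" "Ga \<noteq> 0" "Gb \<noteq> 0" "fn \<noteq> 0" "fp \<noteq> 0"
    and "s1 * s2 = s3"
  shows "((A1 * A2 * Ga) / (fn * Ga) * P1 * PM / (A1 * fp)) * (s1 * B2 / A2) * s2
       = s3 * (B1 * B2 * Gb) / (fn * Gb) * (P1 * PM / (B1 * fp))"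
proof -
  have "((A1 * A2 * Ga) / (fn * Ga) * P1 * PM / (A1 * fp)) * (s1 * B2 / A2) * s2 = (s1 * s2) * B2 * P1 * PM / (fn * fp)"
    using assms by (simp add: field_simps)
  also have "\<dots> = s3 * (B1 * B2 * Gb) / (fn * Gb) * (P1 * PM / (B1 * fp))"
    using assms by (simp add: field_simps)
  finally show ?thesis .
qed

lemma je_aux2:
  fixes G P1 Q1 PM QM A1 A2 F fp fi :: real
  assumes "A1 \<noteq> 0" "A2 \<noteq> 0" "F \<noteq> 0" "fp \<noteq> 0" "fi \<noteq> 0"
  shows "G * (P1 * Q1 * (PM * QM) / (A1 * A2 * F)) * (F / (fp * fi)) =
         G * P1 * PM / (A1 * fp) * (QM * Q1 / (fi * A2))"
  using assms by (simp add: field_simps)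

lemma je_coeff:
  assumes a: "a > -1" and b: "b > -1" and p: "p \<le> n"
  shows "(\<Sum>k\<le>n. jc a b n k * of_nat (k choose p)) * (-1) ^ p = je a b n p"
proof -
  define m where "m = n - p"
  have nm: "n = p + m" using p m_def by simp
  define M where "M = real n + a + b + 1"
  define G where "G = Gamma (real n + a + 1) / (fact n * Gamma (a + 1))"
  define K where "K = G * pochhammer (- real n) p * pochhammer M p / (pochhammer (a + 1) p * fact p)"
  have s1: "(\<Sum>k\<le>n. jc a b n k * of_nat (k choose p)) = (\<Sum>k\<in>{p..n}. jc a b n k * of_nat (k choose p))"
    by (rule sum.mono_neutral_right) auto
  also have "\<dots> = (\<Sum>i\<in>{0..m}. jc a b n (i + p) * of_nat ((i + p) choose p))"
    using sum.shift_bounds_cl_nat_ivl[of "\<lambda>k. jc a b n k * of_nat (k choose p)" 0 p m] nm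
    by (simp add: add.commute)
  also have "\<dots> = (\<Sum>i\<in>{0..m}. K * (pochhammer (M + real p) i * pochhammer (- real m) i
                     / (of_nat (fact i) * pochhammer (a + 1 + real p) i)))"
  proof (rule sum.cong[OF refl])
    fix i assume "i \<in> {0..m}"
    have c1: "real ((p + i) choose p) = fact (p + i) / (fact p * fact i)"
      by (simp add: binomial_fact)
    have c2: "pochhammer (- real n) (p + i) = pochhammer (- real n) p * pochhammer (- real m) i"
      unfolding pochhammer_product' using p m_def by (simp add: of_nat_diff)
    have c3: "pochhammer M (p + i) = pochhammer M p * pochhammer (M + real p) i"
      unfolding pochhammer_product' by simp
    have c4: "pochhammer (a + 1) (p + i) = pochhammer (a + 1) p * pochhammer (a + 1 + real p) i"
      unfolding pochhammer_product' by simp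
    have pos1: "pochhammer (a + 1) p > 0" using a by (intro pochhammer_pos) auto
    have pos2: "pochhammer (a + 1 + real p) i > 0" using a by (intro pochhammer_pos) auto
    show "jc a b n (i + p) * of_nat ((i + p) choose p) = K * (pochhammer (M + real p) i * pochhammer (- real m) i
                     / (of_nat (fact i) * pochhammer (a + 1 + real p) i))"
      unfolding jc_def K_def G_def M_def[symmetric] add.commute[of i p] c1 c2 c3 c4 of_nat_fact
      by (rule je_aux2) (use pos1 pos2 in auto)
  qed
  also have "\<dots> = K * (\<Sum>i\<in>{0..m}. pochhammer (M + real p) i * pochhammer (- real m) i
                     / (of_nat (fact i) * pochhammer (a + 1 + real p) i))"
    by (simp add: sum_distrib_left)
  also have "(\<Sum>i\<in>{0..m}. pochhammer (M + real p) i * pochhammer (- real m) i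
                     / (of_nat (fact i) * pochhammer (a + 1 + real p) i))
           = pochhammer (a + 1 + real p - (M + real p)) m / pochhammer (a + 1 + real p) m"
    by (rule Vandermonde_pochhammer) (use a in auto)
  also have "a + 1 + real p - (M + real p) = - (real n + b)" unfolding M_def by simp
  finally have S: "(\<Sum>k\<le>n. jc a b n k * of_nat (k choose p)) =
     K * (pochhammer (- (real n + b)) m / pochhammer (a + 1 + real p) m)" .
  have pm: "pochhammer (- (real n + b)) m = (-1) ^ m * pochhammer (b + 1 + real p) m"
    unfolding pochhammer_minus using nm by (simp add: algebra_simps)
  have g1: "Gamma (a + 1) > 0" using a by auto
  have g2: "Gamma (b + 1) > 0" using b by auto
  have na: "a + 1 \<notin> \<int>\<^sub>\<le>\<^sub>0" using a by (auto elim!: nonpos_Ints_cases)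
  have nb: "b + 1 \<notin> \<int>\<^sub>\<le>\<^sub>0" using b by (auto elim!: nonpos_Ints_cases)
  have ga: "Gamma (real n + a + 1) = pochhammer (a + 1) n * Gamma (a + 1)"
    using pochhammer_Gamma[OF na, of n] g1 by (simp add: add_ac)
  have gb: "Gamma (real n + b + 1) = pochhammer (b + 1) n * Gamma (b + 1)"
    using pochhammer_Gamma[OF nb, of n] g2 by (simp add: add_ac)
  have pa: "pochhammer (a + 1) n = pochhammer (a + 1) p * pochhammer (a + 1 + real p) m"
    unfolding nm pochhammer_product' by simp
  have pb: "pochhammer (b + 1) n = pochhammer (b + 1) p * pochhammer (b + 1 + real p) m"
    unfolding nm pochhammer_product' by simp
  have pos1: "pochhammer (a + 1) p > 0" using a by (intro pochhammer_pos) auto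
  have pos2: "pochhammer (a + 1 + real p) m > 0" using a by (intro pochhammer_pos) auto
  have pos3: "pochhammer (b + 1) p > 0" using b by (intro pochhammer_pos) auto
  have pos4: "pochhammer (b + 1 + real p) m > 0" using b by (intro pochhammer_pos) auto
  have g1: "Gamma (a + 1) > 0" using a by auto
  have g2: "Gamma (b + 1) > 0" using b by auto
  have sgn: "(-1::real) ^ m * (-1) ^ p = (-1) ^ n" unfolding nm by (simp add: power_add)
  have "K * (pochhammer (- (real n + b)) m / pochhammer (a + 1 + real p) m) * (-1) ^ p = je a b n p"
    unfolding K_def G_def je_def ga gb pa pb pm M_def[symmetric] mult.assoc[symmetric]
    by (rule je_aux[unfolded mult.assoc[symmetric]]) (use pos1 pos2 pos3 pos4 g1 g2 sgn in auto)
  then show ?thesis unfolding S .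
qed

lemma jacobi_sym:
  assumes a: "a > -1" and b: "b > -1"
  shows "jacobi a b n x = (\<Sum>p\<le>n. je a b n p * ((1 + x) / 2) ^ p)"
proof -
  define s where "s = (1 + x) / 2"
  have "jacobi a b n x = (\<Sum>k\<le>n. jc a b n k * (1 - s) ^ k)"
    unfolding poly_jp[symmetric] jp_def poly_pcompose poly_jF s_def
    by (intro sum.cong refl) (simp add: field_simps)
  also have "\<dots> = (\<Sum>k\<le>n. jc a b n k * (\<Sum>p\<le>n. of_nat (k choose p) * (- s) ^ p))"
  proof (intro sum.cong refl)
    fix k assume k: "k \<in> {..n}"
    have "(1 - s) ^ k = (- s + 1) ^ k" by simp
    also have "\<dots> = (\<Sum>p\<le>k. of_nat (k choose p) * (- s) ^ p * 1 ^ (k - p))"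
      by (rule binomial_ring)
    also have "\<dots> = (\<Sum>p\<le>k. of_nat (k choose p) * (- s) ^ p)" by simp
    also have "\<dots> = (\<Sum>p\<le>n. of_nat (k choose p) * (- s) ^ p)"
      using k by (intro sum.mono_neutral_left) auto
    finally show "jc a b n k * (1 - s) ^ k = jc a b n k * (\<Sum>p\<le>n. of_nat (k choose p) * (- s) ^ p)"
      by simp
  qed
  also have "\<dots> = (\<Sum>k\<le>n. \<Sum>p\<le>n. jc a b n k * of_nat (k choose p) * (- s) ^ p)"
    by (simp add: sum_distrib_left mult.assoc)
  also have "\<dots> = (\<Sum>p\<le>n. \<Sum>k\<le>n. jc a b n k * of_nat (k choose p) * (- s) ^ p)"
    by (rule sum.swap)
  also have "\<dots> = (\<Sum>p\<le>n. (\<Sum>k\<le>n. jc a b n k * of_nat (k choose p)) * (-1) ^ p * s ^ p)"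
    by (intro sum.cong refl) (simp add: sum_distrib_right power_minus[of s] mult.assoc)
  also have "\<dots> = (\<Sum>p\<le>n. je a b n p * s ^ p)"
    by (intro sum.cong refl) (simp add: je_coeff[OF a b])
  finally show ?thesis unfolding s_def .
qed

lemma jp_sym:
  assumes a: "a > -1" and b: "b > -1"
  shows "jp a b n = (\<Sum>p\<le>n. smult (je a b n p / 2 ^ p) ([:1, 1:] ^ p))"
proof -
  have "poly (jp a b n) = poly (\<Sum>p\<le>n. smult (je a b n p / 2 ^ p) ([:1, 1:] ^ p))"
    by (auto simp: fun_eq_iff poly_jp jacobi_sym[OF a b] poly_sum power_divide)
  then show ?thesis by (simp add: poly_eq_poly_eq_iff)
qed

lemma je_top:
  assumes b: "b > -1"
  shows "je a b n n = pochhammer (real n + a + b + 1) n / fact n"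
proof -
  have g2: "Gamma (b + 1) > 0" using b by auto
  have nb: "b + 1 \<notin> \<int>\<^sub>\<le>\<^sub>0" using b by (auto elim!: nonpos_Ints_cases)
  have gb: "Gamma (real n + b + 1) = pochhammer (b + 1) n * Gamma (b + 1)"
    using pochhammer_Gamma[OF nb, of n] g2 by (simp add: add_ac)
  have pb: "pochhammer (b + 1) n > 0" using b by (intro pochhammer_pos) auto
  have "(-1::real) ^ n * (-1) ^ n = 1" by (simp flip: power_add add: power_even_eq[symmetric] mult_2[symmetric])
  then show ?thesis unfolding je_def gb pochhammer_same using g2 pb
    by (simp add: field_simps)
qed




lemma pow_powr_comb: "(x::real) > 0 \<Longrightarrow> x ^ n * x powr a = x powr (a + real n)"
  by (simp add: powr_add powr_realpow)

lemma weight_mono_integral: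
  assumes al: "al > -1" and be: "be > -1"
  shows "((\<lambda>t. (1 + t) ^ m * ((1 - t) / 2) ^ k * ((1 - t) powr al * (1 + t) powr be))
     has_integral (2 powr (al + be + real m + 1) * Beta (be + real m + 1) (al + real k + 1))) {-1..1}"
proof -
  define A where "A = be + real m + 1"
  define B where "B = al + real k + 1"
  have "((\<lambda>u. u powr (A - 1) * (1 - u) powr (B - 1)) has_integral Beta A B) (cbox 0 1)"
    unfolding cbox_interval A_def B_def by (rule has_integral_Beta_real) (use al be in auto)
  from has_integral_affinity'[OF this, of "1/2" "1/2"]
  have I: "((\<lambda>t. ((1/2) * t + 1/2) powr (A - 1) * (1 - ((1/2) * t + 1/2)) powr (B - 1)) has_integral (2 * Beta A B)) {-1..1}"
    by (simp add: cbox_interval)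
  have I2: "((\<lambda>t. 2 powr (al + be + real m) * (((1/2) * t + 1/2) powr (A - 1) * (1 - ((1/2) * t + 1/2)) powr (B - 1)))
      has_integral (2 powr (al + be + real m) * (2 * Beta A B))) {-1..1}"
    by (rule has_integral_mult_right[OF I])
  have val: "2 powr (al + be + real m) * (2 * Beta A B) = 2 powr (al + be + real m + 1) * Beta A B"
    by (simp add: powr_add)
  show ?thesis unfolding A_def[symmetric] B_def[symmetric] val[symmetric]
  proof (rule has_integral_spike_finite[OF _ _ I2])
    show "finite {-1, 1::real}" by simp
    fix t :: real assume t: "t \<in> {-1..1} - {-1, 1}"
    define u where "u = (1 + t) / 2"
    define v where "v = (1 - t) / 2"
    have u: "u > 0" and v: "v > 0" using t unfolding u_def v_def by auto
    have e1: "(1/2) * t + 1/2 = u" unfolding u_def by simp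
    have e2: "1 - ((1/2) * t + 1/2) = v" unfolding v_def by simp
    have e3: "1 + t = 2 * u" "1 - t = 2 * v" "(1 - t) / 2 = v" unfolding u_def v_def by auto
    have "(1 + t) ^ m * ((1 - t) / 2) ^ k * ((1 - t) powr al * (1 + t) powr be)
        = (2 powr al * 2 powr be * 2 ^ m) * ((u ^ m * u powr be) * (v ^ k * v powr al))"
      unfolding e3 using u v by (simp add: powr_mult power_mult_distrib mult_ac)
    also have "\<dots> = 2 powr (al + be + real m) * (u powr (A - 1) * v powr (B - 1))"
      using u v unfolding A_def B_def
      by (simp add: pow_powr_comb powr_add powr_realpow add_ac)
    finally have fin: "(1 + t) ^ m * ((1 - t) / 2) ^ k * ((1 - t) powr al * (1 + t) powr be) =
      2 powr (al + be + real m) * (u powr (A - 1) * v powr (B - 1))" .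
    show "(1 + t) ^ m * ((1 - t) / 2) ^ k * ((1 - t) powr al * (1 + t) powr be) =
      2 powr (al + be + real m) * (((1/2) * t + 1/2) powr (A - 1) * (1 - ((1/2) * t + 1/2)) powr (B - 1))"
    proof -
      have "1 - u = v" unfolding u_def v_def by (simp add: field_simps)
      then show ?thesis using fin unfolding e1 by simp
    qed
  qed
qed

definition Lq :: "nat \<Rightarrow> (nat \<Rightarrow> real) \<Rightarrow> (nat \<Rightarrow> real) \<Rightarrow> real poly \<Rightarrow> real" where
  "Lq N xs w p = (\<Sum>j\<le>N. poly p (xs j) * w j)"

lemma Lq_add: "Lq N xs w (p + q) = Lq N xs w p + Lq N xs w q"
  unfolding Lq_def by (simp add: algebra_simps sum.distrib)

lemma Lq_smult: "Lq N xs w (smult c p) = c * Lq N xs w p"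
  unfolding Lq_def by (simp add: sum_distrib_left mult_ac)

lemma Lq_sum: "Lq N xs w (\<Sum>i\<in>A. f i) = (\<Sum>i\<in>A. Lq N xs w (f i))"
  unfolding Lq_def by (simp add: poly_sum sum_distrib_right sum.swap[of _ A])

lemma Lq_integral:
  assumes jgl: "JGL al be N xs w" and deg: "degree p \<le> 2 * N - 1"
    and I: "((\<lambda>t. poly p t * (1 - t) powr al * (1 + t) powr be) has_integral V) {-1..1}"
  shows "Lq N xs w p = V"
proof -
  from jgl deg have "((\<lambda>t. poly p t * (1 - t) powr al * (1 + t) powr be) has_integral Lq N xs w p) {-1..1}"
    unfolding JGL_def Lq_def by blast
  from has_integral_unique[OF this I] show ?thesis .
qed

lemma Lq_mono:
  assumes jgl: "JGL al be N xs w" and al: "al > -1" and be: "be > -1" and mk: "m + k \<le> 2 * N - 1"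
  shows "Lq N xs w ([:1, 1:] ^ m * [:1/2, -1/2:] ^ k) =
           2 powr (al + be + real m + 1) * Beta (be + real m + 1) (al + real k + 1)"
proof (rule Lq_integral[OF jgl])
  show "degree ([:1, 1:] ^ m * [:1/2, -1/2:] ^ k :: real poly) \<le> 2 * N - 1"
  proof -
    have "degree ([:1, 1:] ^ m * [:1/2, -1/2:] ^ k :: real poly) \<le> degree ([:1, 1:] ^ m :: real poly) + degree ([:1/2, -1/2:] ^ k :: real poly)"
      by (rule degree_mult_le)
    also have "\<dots> \<le> m + k" using degree_power_le[of "[:1::real, 1:]" m] degree_power_le[of "[:1/2::real, -1/2:]" k] by simp
    finally show ?thesis using mk by simp
  qed
  have e: "(\<lambda>t. poly ([:1, 1:] ^ m * [:1/2, -1/2:] ^ k) t * (1 - t) powr al * (1 + t) powr be) =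
        (\<lambda>t. (1 + t) ^ m * ((1 - t) / 2) ^ k * ((1 - t) powr al * (1 + t) powr be))"
    by (auto simp: fun_eq_iff diff_divide_distrib mult_ac)
  show "((\<lambda>t. poly ([:1, 1:] ^ m * [:1/2, -1/2:] ^ k) t * (1 - t) powr al * (1 + t) powr be) has_integral
      2 powr (al + be + real m + 1) * Beta (be + real m + 1) (al + real k + 1)) {-1..1}"
    unfolding e by (rule weight_mono_integral[OF al be])
qed

lemma jp_as_sum: "jp a b n = (\<Sum>k\<le>n. smult (jc a b n k) ([:1/2, -1/2:] ^ k))"
proof -
  have "poly (jp a b n) = poly (\<Sum>k\<le>n. smult (jc a b n k) ([:1/2, -1/2:] ^ k))"
    by (auto simp: fun_eq_iff jp_def poly_pcompose poly_jF poly_sum)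
  then show ?thesis by (simp add: poly_eq_poly_eq_iff)
qed

definition Iqn :: "real \<Rightarrow> real \<Rightarrow> nat \<Rightarrow> nat \<Rightarrow> real" where
  "Iqn al be q n = 2 powr (al + be + real q + 1) * (Gamma (real n + al + 1) * Gamma (be + real q + 1)
       / (fact n * Gamma (al + be + real q + 2))) *
     (pochhammer (real q + 1 - real n) n / pochhammer (al + be + real q + 2) n)"

lemma beta_term:
  assumes al: "al > -1" and be: "be > -1"
  shows "jc al be n k * Beta (be + real q + 1) (al + real k + 1) =
     (Gamma (real n + al + 1) * Gamma (be + real q + 1) / (fact n * Gamma (al + be + real q + 2))) *
     (pochhammer (real n + al + be + 1) k * pochhammer (- real n) k /
       (of_nat (fact k) * pochhammer (al + be + real q + 2) k))"
proof -
  define c where "c = al + be + real q + 2"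
  have c: "c > 0" using al be unfolding c_def by simp
  have na: "al + 1 \<notin> \<int>\<^sub>\<le>\<^sub>0" using al by (auto elim!: nonpos_Ints_cases)
  have nc: "c \<notin> \<int>\<^sub>\<le>\<^sub>0" using c by (auto elim!: nonpos_Ints_cases)
  have g1: "Gamma (al + 1) > 0" using al by auto
  have g2: "Gamma c > 0" using c by auto
  have ga: "Gamma (al + real k + 1) = pochhammer (al + 1) k * Gamma (al + 1)"
    using pochhammer_Gamma[OF na, of k] g1 by (simp add: add_ac)
  have gc: "Gamma (be + real q + 1 + (al + real k + 1)) = pochhammer c k * Gamma c"
    using pochhammer_Gamma[OF nc, of k] g2 unfolding c_def by (simp add: add_ac)
  have p1: "pochhammer (al + 1) k > 0" using al by (intro pochhammer_pos) auto
  have p2: "pochhammer c k > 0" using c by (intro pochhammer_pos) auto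
  have gb: "Gamma (be + real q + 1) > 0" using be by auto
  show ?thesis
    unfolding jc_def Beta_altdef rGamma_inverse_Gamma ga gc c_def[symmetric]
    using p1 p2 g1 g2 gb by (simp add: field_simps)
qed

lemma Lq_pow_jp:
  assumes jgl: "JGL al be N xs w" and al: "al > -1" and be: "be > -1" and qn: "q + n \<le> 2 * N - 1"
  shows "Lq N xs w ([:1, 1:] ^ q * jp al be n) = Iqn al be q n"
proof -
  have "Lq N xs w ([:1, 1:] ^ q * jp al be n) =
      (\<Sum>k\<le>n. jc al be n k * Lq N xs w ([:1, 1:] ^ q * [:1/2, -1/2:] ^ k))"
    unfolding jp_as_sum sum_distrib_left Lq_sum by (simp add: Lq_smult)
  also have "\<dots> = (\<Sum>k\<le>n. 2 powr (al + be + real q + 1) * (jc al be n k * Beta (be + real q + 1) (al + real k + 1)))"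
    by (intro sum.cong refl, subst Lq_mono[OF jgl al be]) (use qn in auto)
  also have "\<dots> = 2 powr (al + be + real q + 1) *
     (Gamma (real n + al + 1) * Gamma (be + real q + 1) / (fact n * Gamma (al + be + real q + 2))) *
     (\<Sum>k\<in>{0..n}. pochhammer (real n + al + be + 1) k * pochhammer (- real n) k /
       (of_nat (fact k) * pochhammer (al + be + real q + 2) k))"
    unfolding beta_term[OF al be] by (simp only: sum_distrib_left atLeast0AtMost mult.assoc)
  also have "(\<Sum>k\<in>{0..n}. pochhammer (real n + al + be + 1) k * pochhammer (- real n) k /
       (of_nat (fact k) * pochhammer (al + be + real q + 2) k)) =
       pochhammer (al + be + real q + 2 - (real n + al + be + 1)) n / pochhammer (al + be + real q + 2) n"
    by (rule Vandermonde_pochhammer) (use al be in auto)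
  also have "al + be + real q + 2 - (real n + al + be + 1) = real q + 1 - real n" by simp
  finally show ?thesis unfolding Iqn_def by simp
qed

lemma Iqn_zero: "q < n \<Longrightarrow> Iqn al be q n = 0"
proof -
  assume qn: "q < n"
  have "real q + 1 - real n = - of_nat (n - q - 1)" using qn by (simp add: of_nat_diff)
  moreover have "pochhammer (- of_nat (n - q - 1) :: real) n = 0"
    by (rule pochhammer_of_nat_eq_0_lemma) (use qn in auto)
  ultimately show ?thesis unfolding Iqn_def by simp
qed

lemma gamma_aux:
  fixes P Q X G1 G2 G3 G4 f tp tq S :: real
  assumes "G1 * Q = G3" "P * G2 = G4" "G3 = S * G4" "tq = tp * 2 ^ n"
     "f \<noteq> 0" "G1 \<noteq> 0" "G2 \<noteq> 0" "G4 \<noteq> 0" "S \<noteq> 0" "Q \<noteq> 0"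
  shows "P / f / 2 ^ n * (tq * (X / (f * G1)) * (f / Q)) = tp * X / (S * f * G2)"
proof -
  have "P / f / 2 ^ n * (tq * (X / (f * G1)) * (f / Q)) = P * tp * X / (f * (G1 * Q))"
    using assms by (simp add: field_simps)
  also have "\<dots> = tp * X / (S * f * G2)"
    using assms by (simp add: field_simps)
  finally show ?thesis .
qed

lemma je_Iqn_gamma:
  assumes al: "al > -1" and be: "be > -1"
  shows "je al be n n / 2 ^ n * Iqn al be n n = jacobi_gamma al be n"
proof (cases "n = 0")
  case True
  then show ?thesis unfolding je_def Iqn_def jacobi_gamma_def by (simp add: add_ac)
next
  case False
  define S where "S = al + be"
  have S1: "S + real n + 1 > 0" using al be False unfolding S_def by simp
  have nS: "S + real n + 1 \<notin> \<int>\<^sub>\<le>\<^sub>0" using S1 by (auto elim!: nonpos_Ints_cases)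
  have nS2: "S + real n + 2 \<notin> \<int>\<^sub>\<le>\<^sub>0" using S1 by (auto elim!: nonpos_Ints_cases)
  have G1: "Gamma (S + real n + 2) > 0" using S1 by auto
  have G2: "Gamma (S + real n + 1) > 0" using S1 by auto
  have G4: "Gamma (S + 2 * real n + 1) > 0" using S1 by auto
  have Q: "pochhammer (S + real n + 2) n > 0" using S1 by (intro pochhammer_pos) auto
  have e1: "Gamma (S + real n + 2) * pochhammer (S + real n + 2) n = Gamma (S + 2 * real n + 2)"
    using pochhammer_Gamma[OF nS2, of n] G1 by (simp add: field_simps)
  have e2: "pochhammer (S + real n + 1) n * Gamma (S + real n + 1) = Gamma (S + 2 * real n + 1)"
    using pochhammer_Gamma[OF nS, of n] G2 by (simp add: field_simps)
  have e3: "Gamma (S + 2 * real n + 2) = (S + 2 * real n + 1) * Gamma (S + 2 * real n + 1)"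
  proof -
    have "S + 2 * real n + 1 \<notin> \<int>\<^sub>\<le>\<^sub>0" using S1 by (auto elim!: nonpos_Ints_cases)
    from Gamma_plus1[OF this] show ?thesis by (simp add: add_ac)
  qed
  have tw: "2 powr (S + real n + 1) = 2 powr (S + 1) * 2 ^ n"
    by (simp add: powr_add powr_realpow)
  have jt: "je al be n n = pochhammer (S + real n + 1) n / fact n"
    unfolding je_top[OF be] S_def by (simp add: add_ac)
  define X where "X = Gamma (real n + al + 1) * Gamma (real n + be + 1)"
  have L: "je al be n n / 2 ^ n * Iqn al be n n =
    pochhammer (S + real n + 1) n / fact n / 2 ^ n * (2 powr (S + real n + 1) * (X / (fact n * Gamma (S + real n + 2)))
      * (fact n / pochhammer (S + real n + 2) n))"
    unfolding jt Iqn_def X_def S_def by (simp add: pochhammer_fact add_ac)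
  have R: "jacobi_gamma al be n = 2 powr (S + 1) * X / ((S + 2 * real n + 1) * fact n * Gamma (S + real n + 1))"
    unfolding jacobi_gamma_def X_def S_def using False by (simp add: add_ac)
  show ?thesis unfolding L R
  proof (rule gamma_aux[OF e1 e2 e3 tw])
    show "Gamma (S + real n + 2) \<noteq> 0" "Gamma (S + real n + 1) \<noteq> 0" "Gamma (S + 2 * real n + 1) \<noteq> 0"
      "pochhammer (S + real n + 2) n \<noteq> 0" "S + 2 * real n + 1 \<noteq> 0"
      using G1 G2 G4 Q S1 by linarith+
    show "(fact n :: real) \<noteq> 0" by simp
  qed
qed

lemma Lq_jp_jp_le:
  assumes jgl: "JGL al be N xs w" and al: "al > -1" and be: "be > -1" and mn: "m \<le> n" and nN: "n < N"
  shows "Lq N xs w (jp al be m * jp al be n) = (if m = n then jacobi_gamma al be n else 0)"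
proof -
  have "Lq N xs w (jp al be m * jp al be n) = (\<Sum>p\<le>m. je al be m p / 2 ^ p * Iqn al be p n)"
    unfolding jp_sym[OF al be, of m] sum_distrib_right Lq_sum mult_smult_left Lq_smult
    by (intro sum.cong refl, subst Lq_pow_jp[OF jgl al be]) (use mn nN in auto)
  also have "\<dots> = (if m = n then jacobi_gamma al be n else 0)"
  proof (cases "m = n")
    case True
    have "(\<Sum>p\<le>m. je al be m p / 2 ^ p * Iqn al be p n) =
          je al be m m / 2 ^ m * Iqn al be m n + (\<Sum>p\<in>{..m} - {m}. je al be m p / 2 ^ p * Iqn al be p n)"
      by (rule sum.remove) auto
    also have "(\<Sum>p\<in>{..m} - {m}. je al be m p / 2 ^ p * Iqn al be p n) = 0"
      using True by (intro sum.neutral) (auto simp: Iqn_zero)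
    finally show ?thesis using True je_Iqn_gamma[OF al be, of n] by simp
  next
    case False
    then have "m < n" using mn by simp
    then show ?thesis using False by (auto intro!: sum.neutral simp: Iqn_zero)
  qed
  finally show ?thesis .
qed

lemma Lq_jp_jp:
  assumes jgl: "JGL al be N xs w" and al: "al > -1" and be: "be > -1" and mN: "m < N" and nN: "n < N"
  shows "Lq N xs w (jp al be m * jp al be n) = (if m = n then jacobi_gamma al be n else 0)"
proof (cases "m \<le> n")
  case True
  then show ?thesis using Lq_jp_jp_le[OF jgl al be True nN] by simp
next
  case False
  then show ?thesis using Lq_jp_jp_le[OF jgl al be _ mN, of n] by (simp add: mult.commute)
qed




lemma jp_basis:
  assumes a: "a > -1" and b: "b > -1"
  shows "degree q \<le> n \<Longrightarrow> \<exists>c. q = (\<Sum>i\<le>n. smult (c i) (jp a b i))"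
proof (induction n arbitrary: q)
  case 0
  have d0: "degree (jp a b 0) = 0" by (rule degree_jp[OF a b])
  have nz: "coeff (jp a b 0) 0 \<noteq> 0" by (rule jp_nz[OF a b])
  have "q = smult (coeff q 0 / coeff (jp a b 0) 0) (jp a b 0)"
  proof (rule poly_eqI)
    fix k show "coeff q k = coeff (smult (coeff q 0 / coeff (jp a b 0) 0) (jp a b 0)) k"
    proof (cases k)
      case 0 then show ?thesis using nz by simp
    next
      case (Suc k')
      then have "coeff q k = 0" "coeff (jp a b 0) k = 0" using 0 d0 by (auto intro: coeff_eq_0)
      then show ?thesis by simp
    qed
  qed
  then show ?case by (intro exI[of _ "\<lambda>_. coeff q 0 / coeff (jp a b 0) 0"]) simp
next
  case (Suc n)
  define t where "t = coeff q (Suc n) / coeff (jp a b (Suc n)) (Suc n)"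
  have nz: "coeff (jp a b (Suc n)) (Suc n) \<noteq> 0" by (rule jp_nz[OF a b])
  have dS: "degree (jp a b (Suc n)) = Suc n" by (rule degree_jp[OF a b])
  define r where "r = q - smult t (jp a b (Suc n))"
  have "degree r \<le> n"
  proof (rule degree_le, intro allI impI)
    fix i assume i: "n < i"
    show "coeff r i = 0"
    proof (cases "i = Suc n")
      case True then show ?thesis unfolding r_def t_def using nz by simp
    next
      case False
      then have "i > Suc n" using i by simp
      then have "coeff q i = 0" "coeff (jp a b (Suc n)) i = 0" using Suc.prems dS by (auto intro: coeff_eq_0)
      then show ?thesis unfolding r_def by simp
    qed
  qed
  from Suc.IH[OF this] obtain c where c: "r = (\<Sum>i\<le>n. smult (c i) (jp a b i))" by blast
  have "q = (\<Sum>i\<le>Suc n. smult ((c(Suc n := t)) i) (jp a b i))"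
    using c unfolding r_def by (simp add: algebra_simps)
  then show ?case by blast
qed

lemma jp_indep:
  assumes a: "a > -1" and b: "b > -1"
  shows "(\<Sum>i\<le>n. smult (c i) (jp a b i)) = 0 \<Longrightarrow> i \<le> n \<Longrightarrow> c i = 0"
proof (induction n arbitrary: i)
  case 0
  have "smult (c 0) (jp a b 0) = 0" using 0 by simp
  then have "coeff (smult (c 0) (jp a b 0)) 0 = 0" by (simp only: coeff_0)
  then show ?case using jp_nz[OF a b, of 0] 0 by simp
next
  case (Suc n)
  have "coeff (\<Sum>i\<le>Suc n. smult (c i) (jp a b i)) (Suc n) = c (Suc n) * coeff (jp a b (Suc n)) (Suc n)"
  proof -
    have "coeff (\<Sum>i\<le>n. smult (c i) (jp a b i)) (Suc n) = 0"
      by (rule coeff_eq_0, rule le_less_trans[OF degree_sum_le]) (auto simp: degree_jp[OF a b] intro: le_trans[OF degree_smult_le])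
    then show ?thesis by (simp add: coeff_sum)
  qed
  moreover have "coeff (\<Sum>i\<le>Suc n. smult (c i) (jp a b i)) (Suc n) = 0"
    using Suc.prems(1) by (simp only: coeff_0)
  ultimately have cS: "c (Suc n) = 0" using jp_nz[OF a b, of "Suc n"] by simp
  then have "(\<Sum>i\<le>n. smult (c i) (jp a b i)) = 0" using Suc.prems(1) by simp
  then show ?case using Suc.IH cS Suc.prems(2) by (cases "i = Suc n") auto
qed

lemma conn_coeff_char:
  assumes al: "al > -1" and be: "be > -1" and a: "a > -1" and b: "b > -1"
  shows "jacobi al be n x = (\<Sum>l\<le>n. conn_coeff al be a b l n * jacobi a b l x)"
    and "l > n \<Longrightarrow> conn_coeff al be a b l n = 0"
proof -
  define P where "P = (\<lambda>c. (\<forall>x. jacobi al be n x = (\<Sum>i\<le>n. c i * jacobi a b i x)) \<and> (\<forall>i>n. c i = (0::real)))"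
  obtain c where c: "jp al be n = (\<Sum>i\<le>n. smult (c i) (jp a b i))"
    using jp_basis[OF a b, of "jp al be n" n] degree_jp[OF al be] by auto
  define c' where "c' = (\<lambda>i. if i \<le> n then c i else 0)"
  have Pc: "P c'"
    unfolding P_def c'_def
    by (auto simp: poly_jp[symmetric] c poly_sum intro!: sum.cong)
  have uniq: "d = c'" if Pd: "P d" for d
  proof
    fix i
    have "poly (jp al be n) = poly (\<Sum>i\<le>n. smult (d i) (jp a b i))"
      using Pd unfolding P_def by (auto simp: fun_eq_iff poly_jp poly_sum)
    then have e: "(\<Sum>i\<le>n. smult (c i) (jp a b i)) = (\<Sum>i\<le>n. smult (d i) (jp a b i))"
      by (simp add: poly_eq_poly_eq_iff c)
    have "(\<Sum>i\<le>n. smult (c i - d i) (jp a b i)) = 0"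
      using e by (simp add: smult_diff_left sum_subtractf)
    from jp_indep[OF a b this] have "i \<le> n \<Longrightarrow> d i = c i" by auto
    then show "d i = c' i" using Pd unfolding P_def c'_def by auto
  qed
  have ex1: "\<exists>!c. P c" using Pc uniq by blast
  have the: "(THE c. P c) = c'" using theI'[OF ex1] uniq by blast
  have cc: "conn_coeff al be a b l n = c' l" for l
    unfolding conn_coeff_def using the unfolding P_def by simp
  show "jacobi al be n x = (\<Sum>l\<le>n. conn_coeff al be a b l n * jacobi a b l x)"
    using Pc unfolding P_def cc by blast
  show "l > n \<Longrightarrow> conn_coeff al be a b l n = 0"
    using Pc unfolding P_def cc by blast
qed




lemma fi_mono_integral:
  assumes x: "x > -1" and r: "\<rho> > 0"
  shows "((\<lambda>y. (x - y) powr (\<rho> - 1) * (1 + y) ^ p) has_integral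
           ((1 + x) powr (real p + \<rho>) * Beta (real p + 1) \<rho>)) {-1..x}"
proof -
  define A where "A = real p + 1"
  define h where "h = 1 + x"
  have h: "h > 0" using x h_def by simp
  have B: "((\<lambda>u. u powr (A - 1) * (1 - u) powr (\<rho> - 1)) has_integral Beta A \<rho>) (cbox 0 1)"
    unfolding cbox_interval A_def by (rule has_integral_Beta_real) (use r in auto)
  have hi: "1 / h > 0" using h by simp
  note I0 = has_integral_affinity'[OF B hi, of "1/h"]
  have c1: "inverse (1/h) * (0 - 1/h) = -1" using h by simp
  have c2: "inverse (1/h) * (1 - 1/h) = x" using h unfolding h_def by (simp add: field_simps)
  have c3: "inverse ((1/h) ^ DIM(real)) * Beta A \<rho> = h * Beta A \<rho>" using h by simp
  have I: "((\<lambda>y. ((1/h) * y + 1/h) powr (A - 1) * (1 - ((1/h) * y + 1/h)) powr (\<rho> - 1)) has_integral (h * Beta A \<rho>)) {-1..x}"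
    using I0 unfolding cbox_interval real_scaleR_def c1 c2 c3 .
  have I2: "((\<lambda>y. h powr (real p + \<rho> - 1) * (((1/h) * y + 1/h) powr (A - 1) * (1 - ((1/h) * y + 1/h)) powr (\<rho> - 1)))
      has_integral (h powr (real p + \<rho> - 1) * (h * Beta A \<rho>))) {-1..x}"
    by (rule has_integral_mult_right[OF I])
  have val: "h powr (real p + \<rho> - 1) * (h * Beta A \<rho>) = h powr (real p + \<rho>) * Beta A \<rho>"
    using h by (simp add: powr_diff field_simps)
  show ?thesis unfolding h_def[symmetric] A_def[symmetric] val[symmetric]
  proof (rule has_integral_spike_finite[OF _ _ I2])
    show "finite {-1, x}" by simp
    fix y assume y: "y \<in> {-1..x} - {-1, x}"
    define t where "t = (1 + y) / h"
    have t0: "t > 0" and t1: "1 - t > 0" using y h unfolding t_def h_def by (auto simp: field_simps)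
    have e1: "(1/h) * y + 1/h = t" unfolding t_def by (simp add: add_divide_distrib)
    have e2: "1 - t = (x - y) / h" unfolding t_def h_def using h h_def by (simp add: field_simps)
    have e3a: "1 + y = h * t" using h unfolding t_def by simp
    have e3b: "x - y = h * (1 - t)" unfolding e2 using h by simp
    note e3 = e3a e3b
    have "(x - y) powr (\<rho> - 1) * (1 + y) ^ p = h powr (\<rho> - 1) * h ^ p * (t ^ p * (1 - t) powr (\<rho> - 1))"
      unfolding e3 using h t0 t1 by (simp add: powr_mult power_mult_distrib mult_ac)
    also have "\<dots> = h powr (real p + \<rho> - 1) * (t powr (A - 1) * (1 - t) powr (\<rho> - 1))"
      using h t0 unfolding A_def by (simp add: powr_add powr_diff powr_realpow field_simps)
    finally show "(x - y) powr (\<rho> - 1) * (1 + y) ^ p =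
       h powr (real p + \<rho> - 1) * (((1/h) * y + 1/h) powr (A - 1) * (1 - ((1/h) * y + 1/h)) powr (\<rho> - 1))"
      unfolding e1 .
  qed
qed

lemma fi_sum_integral:
  assumes x: "x > -1" and r: "\<rho> > 0"
  shows "((\<lambda>y. (x - y) powr (\<rho> - 1) * (\<Sum>p\<le>M. e p * (1 + y) ^ p)) has_integral
           (\<Sum>p\<le>M. e p * ((1 + x) powr (real p + \<rho>) * Beta (real p + 1) \<rho>))) {-1..x}"
proof -
  have "((\<lambda>y. \<Sum>p\<le>M. e p * ((x - y) powr (\<rho> - 1) * (1 + y) ^ p)) has_integral
           (\<Sum>p\<le>M. e p * ((1 + x) powr (real p + \<rho>) * Beta (real p + 1) \<rho>))) {-1..x}"
    by (intro has_integral_sum has_integral_mult_right fi_mono_integral x r) auto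
  then show ?thesis by (simp add: sum_distrib_left mult_ac)
qed

lemma beta_gamma_ratio:
  assumes r: "\<rho> > 0"
  shows "Beta (real p + 1) \<rho> / Gamma \<rho> = Gamma (real p + 1) / Gamma (real p + 1 + \<rho>)"
proof -
  have "Gamma \<rho> > 0" "Gamma (real p + 1) > 0" "Gamma (real p + 1 + \<rho>) > 0" using r by auto
  then show ?thesis by (simp add: Beta_altdef rGamma_inverse_Gamma field_simps add_ac)
qed

lemma frac_int_sum:
  assumes x: "x > -1" and r: "\<rho> > 0"
    and u: "\<And>y. u y = (\<Sum>p\<le>M. e p * (1 + y) ^ p)"
  shows "frac_int \<rho> u x = (\<Sum>p\<le>M. e p * (Gamma (real p + 1) / Gamma (real p + 1 + \<rho>)) * (1 + x) powr (real p + \<rho>))"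
proof -
  have "integral {-1..x} (\<lambda>y. (x - y) powr (\<rho> - 1) * u y) =
      (\<Sum>p\<le>M. e p * ((1 + x) powr (real p + \<rho>) * Beta (real p + 1) \<rho>))"
    unfolding u by (rule integral_unique[OF fi_sum_integral[OF x r]])
  then show ?thesis unfolding frac_int_def
    by (simp add: sum_distrib_left beta_gamma_ratio[OF r, symmetric] mult_ac)
qed

lemma poly_shift_expand:
  fixes r :: "real poly"
  assumes "degree r \<le> B"
  shows "poly r y = (\<Sum>p\<le>B. coeff (pcompose r [:-1, 1:]) p * (1 + y) ^ p)"
proof -
  have "poly r y = poly (pcompose r [:-1, 1:]) (1 + y)" by (simp add: poly_pcompose algebra_simps)
  also have "\<dots> = (\<Sum>p\<le>B. coeff (pcompose r [:-1, 1:]) p * (1 + y) ^ p)"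
  proof -
    have d: "degree (pcompose r [:-1, 1:]) \<le> B" using assms by (simp add: degree_pcompose)
    show ?thesis unfolding poly_altdef
      by (rule sum.mono_neutral_left) (use d in \<open>auto intro: coeff_eq_0\<close>)
  qed
  finally show ?thesis .
qed

lemma deriv_funpow_poly: "(deriv ^^ k) (poly (q :: real poly)) = poly ((pderiv ^^ k) q)"
proof (induction k)
  case 0 then show ?case by simp
next
  case (Suc k)
  have d: "deriv (poly p) = poly (pderiv p)" for p :: "real poly"
    by (auto simp: fun_eq_iff intro: DERIV_imp_deriv poly_DERIV)
  show ?case by (simp add: Suc d)
qed

lemma caputo_poly:
  assumes x: "x > -1" and k: "real k - 1 < \<mu>" "\<mu> < real k" and deg: "degree q \<le> B"
  shows "caputo \<mu> (poly q) x =
    (\<Sum>p\<le>B. coeff (pcompose ((pderiv ^^ k) q) [:-1, 1:]) p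
        * (Gamma (real p + 1) / Gamma (real p + 1 + (real k - \<mu>))) * (1 + x) powr (real p + (real k - \<mu>)))"
proof -
  have kk: "nat \<lceil>\<mu>\<rceil> = k" using k by linarith
  have dr: "degree ((pderiv ^^ k) q) \<le> B"
  proof (induction k)
    case 0 then show ?case using deg by simp
  next
    case (Suc k) then show ?case by (simp add: degree_pderiv)
  qed
  show ?thesis
    unfolding caputo_def Let_def kk deriv_funpow_poly
    by (rule frac_int_sum[OF x]) (use k poly_shift_expand[OF dr] in auto)
qed

lemma Gamma_fact_real: "Gamma (real p + 1) = fact p"
  using Gamma_fact[of p] by (simp add: add.commute)

lemma bateman_coeff:
  assumes r: "\<rho> > 0"
  shows "je 0 0 l p * (Gamma (real p + 1) / Gamma (real p + 1 + \<rho>)) =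
         fact l / Gamma (real l + 1 + \<rho>) * je (- \<rho>) \<rho> l p"
proof -
  have nr: "\<rho> + 1 \<notin> \<int>\<^sub>\<le>\<^sub>0" using r by (auto elim!: nonpos_Ints_cases)
  have g1: "Gamma (\<rho> + 1) > 0" using r by auto
  have g2: "Gamma (real l + 1 + \<rho>) > 0" using r by auto
  have gp: "Gamma (real p + 1 + \<rho>) = pochhammer (\<rho> + 1) p * Gamma (\<rho> + 1)"
    using pochhammer_Gamma[OF nr, of p] g1 by (simp add: add_ac)
  have pp: "pochhammer (\<rho> + 1) p > 0" using r by (intro pochhammer_pos) auto
  define PP where "PP = pochhammer (- real l) p * pochhammer (real l + 1) p"
  have L: "je 0 0 l p = (-1) ^ l * PP / (fact p * fact p)"
    unfolding je_def PP_def using Gamma_fact_real[of l] by (simp add: pochhammer_fact[symmetric] add_ac)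
  have R: "je (- \<rho>) \<rho> l p = (-1) ^ l * Gamma (real l + 1 + \<rho>) / (fact l * Gamma (\<rho> + 1)) *
      (PP / (pochhammer (\<rho> + 1) p * fact p))"
    unfolding je_def PP_def by (simp add: add_ac)
  show ?thesis unfolding L R gp Gamma_fact_real using g1 g2 pp
    by (simp add: field_simps)
qed

lemma bateman:
  assumes x: "x > -1" and r: "\<rho> > 0" "\<rho> < 1"
  shows "frac_int \<rho> (legendre l) x = fact l / Gamma (real l + 1 + \<rho>) * (1 + x) powr \<rho> * jacobi (- \<rho>) \<rho> l x"
proof -
  have u: "legendre l y = (\<Sum>p\<le>l. (je 0 0 l p / 2 ^ p) * (1 + y) ^ p)" for y
    unfolding legendre_def jacobi_sym[of 0 0, simplified] by (simp add: power_divide)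
  have "frac_int \<rho> (legendre l) x =
     (\<Sum>p\<le>l. (je 0 0 l p / 2 ^ p) * (Gamma (real p + 1) / Gamma (real p + 1 + \<rho>)) * (1 + x) powr (real p + \<rho>))"
    by (rule frac_int_sum[OF x r(1) u])
  also have "\<dots> = (\<Sum>p\<le>l. fact l / Gamma (real l + 1 + \<rho>) * (1 + x) powr \<rho> * (je (- \<rho>) \<rho> l p * ((1 + x) / 2) ^ p))"
  proof (intro sum.cong refl)
    fix p
    have "(1 + x) powr (real p + \<rho>) = (1 + x) ^ p * (1 + x) powr \<rho>"
      using x by (simp add: powr_add powr_realpow)
    then have "(je 0 0 l p / 2 ^ p) * (Gamma (real p + 1) / Gamma (real p + 1 + \<rho>)) * (1 + x) powr (real p + \<rho>) =
       (je 0 0 l p * (Gamma (real p + 1) / Gamma (real p + 1 + \<rho>))) * ((1 + x) ^ p * (1 + x) powr \<rho> / 2 ^ p)"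
      by simp
    also have "\<dots> = (fact l / Gamma (real l + 1 + \<rho>) * je (- \<rho>) \<rho> l p) * ((1 + x) ^ p * (1 + x) powr \<rho> / 2 ^ p)"
      unfolding bateman_coeff[OF r(1), of l p] ..
    also have "\<dots> = fact l / Gamma (real l + 1 + \<rho>) * (1 + x) powr \<rho> * (je (- \<rho>) \<rho> l p * ((1 + x) / 2) ^ p)"
      by (simp add: power_divide)
    finally show "(je 0 0 l p / 2 ^ p) * (Gamma (real p + 1) / Gamma (real p + 1 + \<rho>)) * (1 + x) powr (real p + \<rho>) =
       fact l / Gamma (real l + 1 + \<rho>) * (1 + x) powr \<rho> * (je (- \<rho>) \<rho> l p * ((1 + x) / 2) ^ p)" .
  qed
  also have "\<dots> = fact l / Gamma (real l + 1 + \<rho>) * (1 + x) powr \<rho> * jacobi (- \<rho>) \<rho> l x"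
    unfolding jacobi_sym[of "- \<rho>" \<rho>, OF _ _] using r by (simp add: sum_distrib_left jacobi_sym)
  finally show ?thesis .
qed




lemma jacobi_gamma_pos:
  assumes al: "al > -1" and be: "be > -1"
  shows "jacobi_gamma al be n > 0"
proof (cases "n = 0")
  case True
  then show ?thesis using al be unfolding jacobi_gamma_def by simp
next
  case False
  then have "2 * real n + al + be + 1 > 0" "real n + al + be + 1 > 0" using al be by auto
  then show ?thesis using al be False unfolding jacobi_gamma_def by simp
qed

lemma discrete_expand:
  assumes jgl: "JGL al be N xs w" and al: "al > -1" and be: "be > -1" and M: "M < N"
    and deg: "degree p \<le> M"
  shows "(\<Sum>n\<le>M. (1 / jacobi_gamma al be n * Lq N xs w (p * jp al be n)) * jacobi al be n x) = poly p x"
proof -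
  obtain d where d: "p = (\<Sum>m\<le>M. smult (d m) (jp al be m))"
    using jp_basis[OF al be deg] by blast
  have L: "Lq N xs w (p * jp al be n) = d n * jacobi_gamma al be n" if n: "n \<le> M" for n
  proof -
    have "Lq N xs w (p * jp al be n) = (\<Sum>m\<le>M. d m * (if m = n then jacobi_gamma al be n else 0))"
      unfolding d sum_distrib_right Lq_sum mult_smult_left Lq_smult
      by (intro sum.cong refl, subst Lq_jp_jp[OF jgl al be]) (use n M in auto)
    also have "\<dots> = d n * jacobi_gamma al be n" using n by (simp add: if_distrib cong: if_cong)
    finally show ?thesis .
  qed
  have "(\<Sum>n\<le>M. (1 / jacobi_gamma al be n * Lq N xs w (p * jp al be n)) * jacobi al be n x) =
        (\<Sum>n\<le>M. d n * jacobi al be n x)"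
  proof (intro sum.cong refl)
    fix n assume n: "n \<in> {..M}"
    have "jacobi_gamma al be n > 0" by (rule jacobi_gamma_pos[OF al be])
    then show "(1 / jacobi_gamma al be n * Lq N xs w (p * jp al be n)) * jacobi al be n x = d n * jacobi al be n x"
      using n by (simp add: L)
  qed
  also have "\<dots> = poly p x" unfolding d by (simp add: poly_sum poly_jp)
  finally show ?thesis .
qed

lemma root_factor:
  fixes h :: "real poly"
  assumes h: "h \<noteq> 0" and R: "finite R" "card R = degree h" "\<forall>s\<in>R. poly h s = 0" and r: "r \<in> R"
  shows "\<exists>g. h = [:-r, 1:] * g \<and> poly g r \<noteq> 0 \<and> (\<forall>s\<in>R - {r}. poly g s = 0) \<and>
             degree g = degree h - 1 \<and> poly (pderiv h) r = poly g r"
proof -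
  have "[:-r, 1:] dvd h" using R(3) r by (simp add: poly_eq_0_iff_dvd)
  then obtain g where g: "h = [:-r, 1:] * g" by (auto elim: dvdE)
  have g0: "g \<noteq> 0" using g h by auto
  have "degree h = degree [:-r, 1::real:] + degree g" unfolding g by (rule degree_mult_eq) (use g0 in auto)
  then have dg: "degree g = degree h - 1" by simp
  have roots: "\<forall>s\<in>R - {r}. poly g s = 0"
  proof
    fix s assume s: "s \<in> R - {r}"
    then have "poly h s = 0" using R(3) by auto
    then show "poly g s = 0" using s g by simp
  qed
  have gr: "poly g r \<noteq> 0"
  proof
    assume gr: "poly g r = 0"
    then have "R \<subseteq> {x. poly g x = 0}" using roots by auto
    then have "card R \<le> card {x. poly g x = 0}"
      by (intro card_mono) (use g0 poly_roots_finite in auto)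
    also have "\<dots> \<le> degree g" by (rule card_poly_roots_bound[OF g0])
    finally show False using R(2) dg r R(1) by (cases "card R") auto
  qed
  have "poly (pderiv h) r = poly g r" unfolding g pderiv_mult by (simp add: pderiv_pCons)
  then show ?thesis using g gr roots dg by blast
qed

lemma node_facts:
  assumes jgl: "JGL al be N xs w"
  shows "xs 0 = -1" "xs N = 1"
    "\<And>i k. i \<le> N \<Longrightarrow> k \<le> N \<Longrightarrow> i < k \<Longrightarrow> xs i < xs k"
    "\<And>i. 1 \<le> i \<Longrightarrow> i \<le> N - 1 \<Longrightarrow> poly (pderiv (jp al be N)) (xs i) = 0"
proof -
  show x0: "xs 0 = -1" and xN: "xs N = 1" using jgl unfolding JGL_def by auto
  have sm: "strict_mono_on {0..N} xs" using jgl unfolding JGL_def by auto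
  show mono: "\<And>i k. i \<le> N \<Longrightarrow> k \<le> N \<Longrightarrow> i < k \<Longrightarrow> xs i < xs k"
    using sm unfolding strict_mono_on_def by auto
  fix i assume i: "1 \<le> i" "i \<le> N - 1"
  have "xs 0 < xs i" "xs i < xs N" using mono[of 0 i] mono[of i N] i by auto
  then have lt: "-1 < xs i" "xs i < 1" using x0 xN by auto
  have "xs i \<in> xs ` {0..N}" using i by auto
  then have "(1 - (xs i)\<^sup>2) * deriv (jacobi al be N) (xs i) = 0"
    using jgl unfolding JGL_def by blast
  moreover have "deriv (jacobi al be N) = poly (pderiv (jp al be N))"
    using deriv_funpow_poly[of 1 "jp al be N"] by (simp add: jacobi_poly)
  moreover have "1 - (xs i)\<^sup>2 \<noteq> 0"
  proof -
    have "(xs i)\<^sup>2 < 1" using lt by (simp add: abs_less_iff power2_less_1_iff[of "xs i"] abs_square_less_1)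
    then show ?thesis by simp
  qed
  ultimately show "poly (pderiv (jp al be N)) (xs i) = 0" by simp
qed

lemma xs_inj:
  assumes jgl: "JGL al be N xs w" and "i \<le> N" "k \<le> N" "xs i = xs k"
  shows "i = k"
  using node_facts(3)[OF jgl, of i k] node_facts(3)[OF jgl, of k i] assms(2-4)
  by (cases "i < k"; cases "k < i") auto

lemma xs_range:
  assumes jgl: "JGL al be N xs w" and "1 \<le> i" "i \<le> N - 1" "N \<ge> 1"
  shows "-1 < xs i" "xs i < 1"
  using node_facts[OF jgl] node_facts(3)[OF jgl, of 0 i] node_facts(3)[OF jgl, of i N] assms by auto

lemma degree_D:
  assumes al: "al > -1" and be: "be > -1"
  shows "degree (pderiv (jp al be N)) = N - 1"
  by (simp add: degree_pderiv degree_jp[OF al be])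

lemma D_nz:
  assumes al: "al > -1" and be: "be > -1" and N: "N \<ge> 1"
  shows "pderiv (jp al be N) \<noteq> 0"
  using N by (simp add: pderiv_eq_0_iff degree_jp[OF al be])

lemma ode_m1:
  assumes al: "al > -1"
  shows "2 * (be + 1) * poly (pderiv (jp al be N)) (-1) = - (real N * (real N + al + be + 1)) * poly (jp al be N) (-1)"
  using jacobi_ode[OF al, of "-1" be N] by (simp add: algebra_simps)

lemma ode_p1:
  assumes al: "al > -1"
  shows "2 * (al + 1) * poly (pderiv (jp al be N)) 1 = real N * (real N + al + be + 1) * poly (jp al be N) 1"
  using jacobi_ode[OF al, of 1 be N] by (simp add: algebra_simps)

lemma ode_int:
  assumes al: "al > -1" and D0: "poly (pderiv (jp al be N)) x = 0"
  shows "(1 - x^2) * poly (pderiv (pderiv (jp al be N))) x = - (real N * (real N + al + be + 1)) * poly (jp al be N) x"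
  using jacobi_ode[OF al, of x be N] D0 by (simp add: algebra_simps)

lemma pj_aux:
  fixes lam d P1 Pm c b1 :: real
  assumes "lam \<noteq> 0" "d \<noteq> 0" "P1 \<noteq> 0" "c \<noteq> 0" "b1 \<noteq> 0"
  shows "(- lam * Pm / b1 / d) / (lam * P1 / c / d) = - c / b1 * Pm / P1"
  using assms by (simp add: field_simps)

lemma pj1:
  assumes jgl: "JGL al be N xs w" and N: "N \<ge> 2" and al: "al > -1" and be: "be > -1"
    and j: "j \<in> {1..N}"
  shows "\<exists>p. degree p \<le> N - 1 \<and> (\<forall>i\<in>{1..N}. poly p (xs i) = (if i = j then 1 else 0)) \<and>
     poly p (-1) = - (if j = N then al + 1 else 1) / (be + 1) * jacobi al be N (-1) / jacobi al be N (xs j)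
     \<and> jacobi al be N (xs j) \<noteq> 0"
proof -
  define P where "P = jp al be N"
  define D where "D = pderiv P"
  define H where "H = [:1, -1:] * D"
  define lam where "lam = real N * (real N + al + be + 1)"
  have lam: "lam > 0" unfolding lam_def using N al be by simp
  have D0: "D \<noteq> 0" unfolding D_def P_def using D_nz[OF al be] N by simp
  have H0: "H \<noteq> 0"
  proof
    assume "H = 0"
    then have "[:1, -1:] = (0 :: real poly) \<or> D = 0" unfolding H_def by (simp only: mult_eq_0_iff)
    then show False using D0 by simp
  qed
  have dH: "degree H = N"
    unfolding H_def D_def P_def using D0 N by (subst degree_mult_eq) (auto simp: degree_D[OF al be] D_def P_def)
  define R where "R = xs ` {1..N}"
  have fR: "finite R" unfolding R_def by simp
  have cR: "card R = degree H" unfolding R_def dH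
    by (subst card_image) (auto intro!: inj_onI dest: xs_inj[OF jgl])
  have rR: "\<forall>s\<in>R. poly H s = 0"
  proof
    fix s assume "s \<in> R"
    then obtain i where i: "i \<in> {1..N}" "s = xs i" unfolding R_def by auto
    show "poly H s = 0"
    proof (cases "i = N")
      case True then show ?thesis using i node_facts(2)[OF jgl] unfolding H_def by simp
    next
      case False
      then have "poly D (xs i) = 0" using node_facts(4)[OF jgl, of i] i unfolding D_def P_def by auto
      then show ?thesis using i unfolding H_def by simp
    qed
  qed
  have jR: "xs j \<in> R" using j unfolding R_def by auto
  obtain g where g: "H = [:- xs j, 1:] * g" "poly g (xs j) \<noteq> 0" "\<forall>s\<in>R - {xs j}. poly g s = 0"
    "degree g = degree H - 1" "poly (pderiv H) (xs j) = poly g (xs j)"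
    using root_factor[OF H0 fR cR rR jR] by blast
  define p where "p = smult (1 / poly g (xs j)) g"
  have dp: "degree p \<le> N - 1" unfolding p_def using g(4) dH by simp
  have vals: "\<forall>i\<in>{1..N}. poly p (xs i) = (if i = j then 1 else 0)"
  proof
    fix i assume i: "i \<in> {1..N}"
    show "poly p (xs i) = (if i = j then 1 else 0)"
    proof (cases "i = j")
      case True then show ?thesis unfolding p_def using g(2) by simp
    next
      case False
      then have "xs i \<noteq> xs j" using xs_inj[OF jgl, of i j] i j by auto
      then have "xs i \<in> R - {xs j}" using i unfolding R_def by auto
      then show ?thesis unfolding p_def using g(3) False by simp
    qed
  qed
  have xjm: "xs j > -1" using node_facts(3)[OF jgl, of 0 j] j node_facts(1)[OF jgl] by auto
  have Hm1: "poly H (-1) = 2 * poly D (-1)" unfolding H_def by simp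
  have Hm1': "poly H (-1) = (-1 - xs j) * poly g (-1)" unfolding g(1) by (simp add: algebra_simps)
  have gm1: "poly g (-1) = 2 * poly D (-1) / (-1 - xs j)" using Hm1 Hm1' xjm by (simp add: field_simps)
  have Dm1: "2 * poly D (-1) = - lam * poly P (-1) / (be + 1)"
    using ode_m1[OF al, of be N] be unfolding D_def P_def lam_def by (simp add: field_simps)
  have dH': "poly (pderiv H) x = (1 - x) * poly (pderiv D) x - poly D x" for x
    unfolding H_def pderiv_mult by (simp add: pderiv_pCons algebra_simps)
  have key: "(-1 - xs j) * poly g (xs j) = lam * poly P (xs j) / (if j = N then al + 1 else 1)"
  proof (cases "j = N")
    case True
    then have xj: "xs j = 1" using node_facts(2)[OF jgl] by simp
    have "poly g (xs j) = - poly D 1" using g(5) dH' xj by simp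
    moreover have "2 * (al + 1) * poly D 1 = lam * poly P 1"
      using ode_p1[OF al, of be N] unfolding D_def P_def lam_def .
    ultimately show ?thesis using True xj al by (simp add: field_simps)
  next
    case False
    then have ji: "j \<le> N - 1" using j by auto
    have D0: "poly D (xs j) = 0" using node_facts(4)[OF jgl, of j] j ji unfolding D_def P_def by auto
    have e1: "poly g (xs j) = (1 - xs j) * poly (pderiv D) (xs j)" using g(5) dH' D0 by simp
    have e2: "(1 - (xs j)^2) * poly (pderiv D) (xs j) = - lam * poly P (xs j)"
      using ode_int[OF al, where x="xs j" and N=N and be=be] D0 unfolding D_def P_def lam_def by simp
    have "(-1 - xs j) * poly g (xs j) = - ((1 - (xs j)^2) * poly (pderiv D) (xs j))"
      unfolding e1 by (simp add: power2_eq_square algebra_simps)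
    also have "\<dots> = lam * poly P (xs j)" unfolding e2 by simp
    finally show ?thesis using False by simp
  qed
  have cpos: "(if j = N then al + 1 else 1) > 0" using al by simp
  have Pxj: "poly P (xs j) \<noteq> 0"
  proof
    assume "poly P (xs j) = 0"
    then have "(-1 - xs j) * poly g (xs j) = 0" using key by simp
    then show False using g(2) xjm by simp
  qed
  have "poly p (-1) = poly g (-1) / poly g (xs j)" unfolding p_def by simp
  also have "\<dots> = - (if j = N then al + 1 else 1) / (be + 1) * poly P (-1) / poly P (xs j)"
  proof -
    have a1: "poly g (-1) = - lam * poly P (-1) / (be + 1) / (-1 - xs j)" using gm1 Dm1 by simp
    have ne: "-1 - xs j \<noteq> 0" using xjm by simp
    have "poly g (xs j) = ((-1 - xs j) * poly g (xs j)) / (-1 - xs j)" using ne by simp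
    then have a2: "poly g (xs j) = lam * poly P (xs j) / (if j = N then al + 1 else 1) / (-1 - xs j)"
      unfolding key .
    show ?thesis unfolding a1 a2 by (rule pj_aux) (use lam ne Pxj cpos be in auto)
  qed
  finally show ?thesis using dp vals Pxj unfolding P_def poly_jp by blast
qed

lemma pj_aux2:
  fixes lam d e P1 Pm b1 :: real
  assumes "lam \<noteq> 0" "d \<noteq> 0" "e \<noteq> 0" "P1 \<noteq> 0" "b1 \<noteq> 0"
  shows "(- lam * Pm / (2 * b1) / d) / (lam * P1 / (d * e)) = - e * Pm / (2 * b1 * P1)"
  using assms by (simp add: field_simps)

lemma pj_aux3:
  fixes lam d e P1 Pm b1 :: real
  assumes "lam \<noteq> 0" "d \<noteq> 0" "e \<noteq> 0" "P1 \<noteq> 0" "b1 \<noteq> 0"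
  shows "(- (- lam) * Pm / (2 * b1) / d) / (lam * P1 / (d * e)) = e * Pm / (2 * b1 * P1)"
  using assms by (simp add: field_simps)

lemma pj2:
  assumes jgl: "JGL al be N xs w" and N: "N \<ge> 2" and al: "al > -1" and be: "be > -1"
    and j: "j \<in> {1..N-1}"
  shows "\<exists>p. degree p \<le> N - 2 \<and> (\<forall>i\<in>{1..N-1}. poly p (xs i) = (if i = j then 1 else 0)) \<and>
     poly p (-1) = (xs j - 1) * jacobi al be N (-1) / (2 * (be + 1) * jacobi al be N (xs j)) \<and>
     poly p 1 = - ((1 + xs j) * jacobi al be N 1 / (2 * (al + 1) * jacobi al be N (xs j)))
     \<and> jacobi al be N (xs j) \<noteq> 0"
proof -
  define P where "P = jp al be N"
  define D where "D = pderiv P"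
  define lam where "lam = real N * (real N + al + be + 1)"
  have lam: "lam > 0" unfolding lam_def using N al be by simp
  have D0: "D \<noteq> 0" unfolding D_def P_def using D_nz[OF al be] N by simp
  have dD: "degree D = N - 1" unfolding D_def P_def by (rule degree_D[OF al be])
  define R where "R = xs ` {1..N-1}"
  have fR: "finite R" unfolding R_def by simp
  have cR: "card R = degree D" unfolding R_def dD
  proof (subst card_image)
    show "inj_on xs {1..N - 1}"
      by (rule inj_onI) (rule xs_inj[OF jgl], auto)
  qed simp
  have rR: "\<forall>s\<in>R. poly D s = 0"
    using node_facts(4)[OF jgl] unfolding R_def D_def P_def by auto
  have jR: "xs j \<in> R" using j unfolding R_def by auto
  obtain g where g: "D = [:- xs j, 1:] * g" "poly g (xs j) \<noteq> 0" "\<forall>s\<in>R - {xs j}. poly g s = 0"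
    "degree g = degree D - 1" "poly (pderiv D) (xs j) = poly g (xs j)"
    using root_factor[OF D0 fR cR rR jR] by blast
  define p where "p = smult (1 / poly g (xs j)) g"
  have dp: "degree p \<le> N - 2"
  proof -
    have "degree p \<le> degree g" unfolding p_def by (rule degree_smult_le)
    then show ?thesis using g(4) dD by simp
  qed
  have vals: "\<forall>i\<in>{1..N-1}. poly p (xs i) = (if i = j then 1 else 0)"
  proof
    fix i assume i: "i \<in> {1..N-1}"
    show "poly p (xs i) = (if i = j then 1 else 0)"
    proof (cases "i = j")
      case True then show ?thesis unfolding p_def using g(2) by simp
    next
      case False
      have "i \<le> N" "j \<le> N" using i j by auto
      then have "xs i \<noteq> xs j" using xs_inj[OF jgl, of i j] False by auto
      then have "xs i \<in> R - {xs j}" using i unfolding R_def by auto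
      then show ?thesis unfolding p_def using g(3) False by simp
    qed
  qed
  have xjr: "-1 < xs j" "xs j < 1" using xs_range[OF jgl, of j] j N by auto
  have Dxj: "poly D (xs j) = 0" using rR jR by blast
  have e2: "(1 - (xs j)^2) * poly g (xs j) = - lam * poly P (xs j)"
    using ode_int[OF al, where x="xs j" and N=N and be=be] Dxj g(5) unfolding D_def P_def lam_def by simp
  have Pxj: "poly P (xs j) \<noteq> 0"
  proof
    assume "poly P (xs j) = 0"
    then have "(1 - (xs j)^2) * poly g (xs j) = 0" using e2 by simp
    moreover have "1 - (xs j)^2 \<noteq> 0"
    proof -
      have "(1 - xs j) * (1 + xs j) > 0" using xjr by simp
      then show ?thesis by (simp add: power2_eq_square algebra_simps)
    qed
    ultimately show False using g(2) by simp
  qed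
  have d1: "-1 - xs j \<noteq> 0" "1 - xs j \<noteq> 0" "1 + xs j \<noteq> 0" using xjr by auto
  have gx: "poly g (xs j) = lam * poly P (xs j) / ((-1 - xs j) * (1 - xs j))"
  proof -
    have "(-1 - xs j) * (1 - xs j) = - (1 - (xs j)^2)" by (simp add: power2_eq_square algebra_simps)
    then have "((-1 - xs j) * (1 - xs j)) * poly g (xs j) = - ((1 - (xs j)^2) * poly g (xs j))" by (simp add: algebra_simps)
    then have h: "((-1 - xs j) * (1 - xs j)) * poly g (xs j) = lam * poly P (xs j)" unfolding e2 by simp
    have "(-1 - xs j) * (1 - xs j) \<noteq> 0" using d1 by simp
    then show ?thesis using h by (metis nonzero_mult_div_cancel_left)
  qed
  have gx': "poly g (xs j) = lam * poly P (xs j) / ((1 - xs j) * (-1 - xs j))"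
    unfolding gx by (simp add: mult.commute)
  have Dm1: "poly D (-1) = (-1 - xs j) * poly g (-1)" unfolding g(1) by (simp add: algebra_simps)
  have Dp1: "poly D 1 = (1 - xs j) * poly g 1" unfolding g(1) by (simp add: algebra_simps)
  have om: "poly D (-1) = - lam * poly P (-1) / (2 * (be + 1))"
    using ode_m1[OF al, of be N] be unfolding D_def P_def lam_def by (simp add: field_simps)
  have op: "poly D 1 = - (- lam) * poly P 1 / (2 * (al + 1))"
    using ode_p1[OF al, of be N] al unfolding D_def P_def lam_def by (simp add: field_simps)
  have gm1: "poly g (-1) = - lam * poly P (-1) / (2 * (be + 1)) / (-1 - xs j)"
  proof -
    have h: "(-1 - xs j) * poly g (-1) = - lam * poly P (-1) / (2 * (be + 1))" using Dm1 om by simp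
    show ?thesis using h d1(1) by (metis nonzero_mult_div_cancel_left)
  qed
  have gp1: "poly g 1 = - (- lam) * poly P 1 / (2 * (al + 1)) / (1 - xs j)"
  proof -
    have h: "(1 - xs j) * poly g 1 = - (- lam) * poly P 1 / (2 * (al + 1))" using Dp1 op by simp
    show ?thesis using h d1(2) by (metis nonzero_mult_div_cancel_left)
  qed
  have v1: "poly p (-1) = (xs j - 1) * poly P (-1) / (2 * (be + 1) * poly P (xs j))"
  proof -
    have "poly p (-1) = poly g (-1) / poly g (xs j)" unfolding p_def by simp
    also have "\<dots> = - (1 - xs j) * poly P (-1) / (2 * (be + 1) * poly P (xs j))"
      unfolding gm1 gx by (rule pj_aux2) (use lam d1 Pxj be in auto)
    finally show ?thesis by simp
  qed
  have v2: "poly p 1 = - ((1 + xs j) * poly P 1 / (2 * (al + 1) * poly P (xs j)))"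
  proof -
    have "poly p 1 = poly g 1 / poly g (xs j)" unfolding p_def by simp
    also have "\<dots> = (-1 - xs j) * poly P 1 / (2 * (al + 1) * poly P (xs j))"
      unfolding gp1 gx' by (rule pj_aux3) (use lam d1 Pxj al in auto)
    also have "\<dots> = - ((1 + xs j) * poly P 1 / (2 * (al + 1) * poly P (xs j)))"
    proof -
      have m: "(-1 - xs j) = - (1 + xs j)" by simp
      show ?thesis unfolding m by (simp only: mult_minus_left minus_divide_left)
    qed
    finally show ?thesis .
  qed
  show ?thesis using dp vals v1 v2 Pxj unfolding P_def poly_jp by blast
qed




definition pint :: "real poly \<Rightarrow> real poly" where
  "pint p = (\<Sum>i\<le>degree p. monom (coeff p i / real (Suc i)) (Suc i))"

lemma pderiv_sum': "pderiv (sum f A) = (\<Sum>x\<in>A. pderiv (f x))"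
  using higher_pderiv_sum[of 1 f A] by simp

lemma pderiv_pint: "pderiv (pint p) = p"
proof -
  have "pderiv (pint p) = (\<Sum>i\<le>degree p. monom (coeff p i) i)"
    unfolding pint_def pderiv_sum' by (intro sum.cong refl) (simp add: pderiv_monom)
  also have "\<dots> = p" by (rule poly_as_sum_of_monoms)
  finally show ?thesis .
qed

lemma degree_pint: "degree (pint p) \<le> degree p + 1"
  unfolding pint_def by (rule degree_sum_le) (auto intro: order_trans[OF degree_monom_le])

lemma integral_poly:
  assumes "a \<le> b"
  shows "((poly p) has_integral (poly (pint p) b - poly (pint p) a)) {a..b}"
proof (rule fundamental_theorem_of_calculus[OF assms])
  fix x
  have "((poly (pint p)) has_real_derivative poly (pderiv (pint p)) x) (at x within {a..b})"
    by (rule DERIV_subset[OF poly_DERIV]) simp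
  then show "((poly (pint p)) has_vector_derivative poly p x) (at x within {a..b})"
    by (simp add: pderiv_pint has_real_derivative_iff_has_vector_derivative)
qed

lemma integral_poly_eq:
  assumes "a \<le> b"
  shows "integral {a..b} (poly p) = poly (pint p) b - poly (pint p) a"
  using integral_poly[OF assms] by (rule integral_unique)

lemma fi_poly_integral:
  fixes x \<rho> :: real and q :: "real poly"
  assumes x: "x > -1" and r: "\<rho> > 0"
  shows "((\<lambda>y. (x - y) powr (\<rho> - 1) * poly q y) has_integral
      (\<Sum>p\<le>degree q. coeff (pcompose q [:-1, 1:]) p * ((1 + x) powr (real p + \<rho>) * Beta (real p + 1) \<rho>))) {-1..x}"
  using fi_sum_integral[OF x r, of "\<lambda>p. coeff (pcompose q [:-1, 1:]) p" "degree q"]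
  by (simp add: poly_shift_expand[of q "degree q", symmetric])

lemma fi_poly_integrable:
  fixes x \<rho> :: real and q :: "real poly"
  assumes x: "x > -1" and r: "\<rho> > 0"
  shows "(\<lambda>y. (x - y) powr (\<rho> - 1) * poly q y) integrable_on {-1..x}"
  using fi_poly_integral[OF x r] by blast

lemma frac_int_poly_sum:
  fixes x \<rho> :: real
  assumes x: "x > -1" and r: "\<rho> > 0" and fin: "finite L"
  shows "frac_int \<rho> (poly (\<Sum>l\<in>L. smult (c l) (q l))) x = (\<Sum>l\<in>L. c l * frac_int \<rho> (poly (q l)) x)"
proof -
  have "integral {-1..x} (\<lambda>y. (x - y) powr (\<rho> - 1) * poly (\<Sum>l\<in>L. smult (c l) (q l)) y)
      = integral {-1..x} (\<lambda>y. \<Sum>l\<in>L. c l * ((x - y) powr (\<rho> - 1) * poly (q l) y))"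
    by (simp add: poly_sum sum_distrib_left mult_ac)
  also have "\<dots> = (\<Sum>l\<in>L. integral {-1..x} (\<lambda>y. c l * ((x - y) powr (\<rho> - 1) * poly (q l) y)))"
    by (rule integral_sum[OF fin]) (auto intro: integrable_on_mult_right fi_poly_integrable[OF x r])
  also have "\<dots> = (\<Sum>l\<in>L. c l * integral {-1..x} (\<lambda>y. (x - y) powr (\<rho> - 1) * poly (q l) y))"
    by (intro sum.cong refl) (simp add: fi_poly_integrable[OF x r])
  finally show ?thesis unfolding frac_int_def by (simp add: sum_distrib_left mult_ac)
qed

lemma higher_pderiv_diff: "(pderiv ^^ k) (p - q) = (pderiv ^^ k) p - (pderiv ^^ k) (q :: real poly)"
  by (induction k) (simp_all add: pderiv_diff)

lemma caputo_diff:
  fixes x \<mu> :: real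
  assumes x: "x > -1" and k: "real k - 1 < \<mu>" "\<mu> < real k" and d1: "degree q1 \<le> B" and d2: "degree q2 \<le> B"
  shows "caputo \<mu> (poly (q1 - q2)) x = caputo \<mu> (poly q1) x - caputo \<mu> (poly q2) x"
proof -
  have d: "degree (q1 - q2) \<le> B" using d1 d2 by (meson degree_diff_le le_trans)
  show ?thesis
    unfolding caputo_poly[OF x k d1] caputo_poly[OF x k d2] caputo_poly[OF x k d]
    by (simp add: higher_pderiv_diff pcompose_diff sum_subtractf[symmetric] algebra_simps)
qed

lemma caputo_zero_imp:
  fixes \<mu> :: real and d :: "real poly"
  assumes k: "real k - 1 < \<mu>" "\<mu> < real k" and deg: "degree d \<le> N" and kN: "k \<le> N"
    and X: "finite X" "card X = N + 1 - k" "\<forall>x\<in>X. x > -1" "\<forall>x\<in>X. caputo \<mu> (poly d) x = 0"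
  shows "(pderiv ^^ k) d = 0"
proof -
  define \<rho> where "\<rho> = real k - \<mu>"
  have r: "\<rho> > 0" using k unfolding \<rho>_def by simp
  define r' where "r' = pcompose ((pderiv ^^ k) d) [:-1, 1:]"
  have dr': "degree r' \<le> N - k" unfolding r'_def using deg
    by (simp add: degree_pcompose degree_higher_pderiv)
  define g where "g = (\<lambda>p::nat. Gamma (real p + 1) / Gamma (real p + 1 + \<rho>))"
  have gpos: "g p > 0" for p unfolding g_def using r by auto
  define R where "R = (\<Sum>p\<le>N. monom (coeff r' p * g p) p)"
  have cR: "coeff R p = (if p \<le> N then coeff r' p * g p else 0)" for p
    unfolding R_def by (simp add: coeff_sum)
  have dR: "degree R \<le> N - k"
  proof (rule degree_le, intro allI impI)
    fix p assume "N - k < p"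
    then have "coeff r' p = 0" using dr' by (intro coeff_eq_0) auto
    then show "coeff R p = 0" unfolding cR by simp
  qed
  have root: "poly R (1 + x) = 0" if xX: "x \<in> X" for x
  proof -
    have xm: "x > -1" using X(3) xX by auto
    have "0 = caputo \<mu> (poly d) x" using X(4) xX by auto
    also have "\<dots> = (\<Sum>p\<le>N. coeff r' p * g p * (1 + x) powr (real p + \<rho>))"
      unfolding caputo_poly[OF xm k deg] r'_def g_def \<rho>_def ..
    also have "\<dots> = (1 + x) powr \<rho> * poly R (1 + x)"
      unfolding R_def poly_sum poly_monom sum_distrib_left
      using xm by (intro sum.cong refl) (simp add: powr_add powr_realpow mult_ac)
    finally have "(1 + x) powr \<rho> * poly R (1 + x) = 0" by simp
    then show ?thesis using xm by simp
  qed
  have R0: "R = 0"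
  proof (rule ccontr)
    assume R0: "R \<noteq> 0"
    have "(\<lambda>x. 1 + x) ` X \<subseteq> {y. poly R y = 0}" using root by auto
    then have "card ((\<lambda>x. 1 + x) ` X) \<le> card {y. poly R y = 0}"
      by (intro card_mono) (use R0 poly_roots_finite in auto)
    also have "\<dots> \<le> degree R" by (rule card_poly_roots_bound[OF R0])
    finally have "card X \<le> N - k" using dR by (subst (asm) card_image) (auto intro: inj_onI)
    then show False using X(2) kN by simp
  qed
  have "coeff r' p = 0" for p
  proof (cases "p \<le> N")
    case True
    have "coeff r' p * g p = 0" using cR[of p] True R0 by simp
    then show ?thesis using gpos[of p] by simp
  next
    case False
    then show ?thesis using dr' by (intro coeff_eq_0) auto
  qed
  then have r'0: "r' = 0" by (intro poly_eqI) simp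
  have "poly ((pderiv ^^ k) d) y = 0" for y
  proof -
    have "poly ((pderiv ^^ k) d) y = poly r' (1 + y)" unfolding r'_def by (simp add: poly_pcompose algebra_simps)
    then show ?thesis using r'0 by simp
  qed
  then show ?thesis using poly_all_0_iff_0 by blast
qed

lemma birkhoff1_unique:
  assumes jgl: "JGL al be N xs w" and N: "N \<ge> 2" and mu: "0 < \<mu>" "\<mu> < 1"
    and q1: "birkhoff1 \<mu> N xs j q1" and q2: "birkhoff1 \<mu> N xs j q2"
  shows "q1 = q2"
proof -
  define d where "d = q1 - q2"
  have d1: "degree q1 \<le> N" and d2: "degree q2 \<le> N" using q1 q2 unfolding birkhoff1_def by auto
  have dd: "degree d \<le> N" unfolding d_def using d1 d2 by (meson degree_diff_le le_trans)
  have k: "real 1 - 1 < \<mu>" "\<mu> < real 1" using mu by auto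
  define X where "X = xs ` {1..N}"
  have xm: "\<forall>x\<in>X. x > -1"
  proof
    fix x assume "x \<in> X"
    then obtain i where i: "i \<in> {1..N}" "x = xs i" unfolding X_def by auto
    then show "x > -1" using node_facts(3)[OF jgl, of 0 i] node_facts(1)[OF jgl] by auto
  qed
  have cX: "card X = N + 1 - 1" unfolding X_def
  proof (subst card_image)
    show "inj_on xs {1..N}" by (rule inj_onI) (rule xs_inj[OF jgl], auto)
  qed simp
  have cz: "\<forall>x\<in>X. caputo \<mu> (poly d) x = 0"
  proof
    fix x assume "x \<in> X"
    then obtain i where i: "i \<in> {1..N}" "x = xs i" unfolding X_def by auto
    have xx: "x > -1" using xm \<open>x \<in> X\<close> by auto
    show "caputo \<mu> (poly d) x = 0" unfolding d_def caputo_diff[OF xx k d1 d2] using q1 q2 i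
      unfolding birkhoff1_def by auto
  qed
  have "(pderiv ^^ 1) d = 0"
    by (rule caputo_zero_imp[OF k dd _ _ cX xm cz]) (use N X_def in auto)
  then have "degree d = 0" by (simp add: pderiv_eq_0_iff)
  then have dc: "d = [:coeff d 0:]" by (rule degree_0_id[symmetric])
  have "poly d (-1) = 0" using q1 q2 unfolding d_def birkhoff1_def by simp
  moreover have "poly d (-1) = coeff d 0" by (subst dc) simp
  ultimately have "coeff d 0 = 0" by simp
  then have "d = 0" using dc by simp
  then show ?thesis unfolding d_def by simp
qed

lemma birkhoff2_unique:
  assumes jgl: "JGL al be N xs w" and N: "N \<ge> 2" and mu: "1 < \<mu>" "\<mu> < 2"
    and q1: "birkhoff2 \<mu> N xs j q1" and q2: "birkhoff2 \<mu> N xs j q2"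
  shows "q1 = q2"
proof -
  define d where "d = q1 - q2"
  have d1: "degree q1 \<le> N" and d2: "degree q2 \<le> N" using q1 q2 unfolding birkhoff2_def by auto
  have dd: "degree d \<le> N" unfolding d_def using d1 d2 by (meson degree_diff_le le_trans)
  have k: "real 2 - 1 < \<mu>" "\<mu> < real 2" using mu by auto
  define X where "X = xs ` {1..N-1}"
  have xm: "\<forall>x\<in>X. x > -1"
  proof
    fix x assume "x \<in> X"
    then obtain i where i: "i \<in> {1..N-1}" "x = xs i" unfolding X_def by auto
    then show "x > -1" using node_facts(3)[OF jgl, of 0 i] node_facts(1)[OF jgl] by auto
  qed
  have cX: "card X = N + 1 - 2" unfolding X_def
  proof (subst card_image)
    show "inj_on xs {1..N-1}" by (rule inj_onI) (rule xs_inj[OF jgl], auto)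
  qed simp
  have cz: "\<forall>x\<in>X. caputo \<mu> (poly d) x = 0"
  proof
    fix x assume "x \<in> X"
    then obtain i where i: "i \<in> {1..N-1}" "x = xs i" unfolding X_def by auto
    have xx: "x > -1" using xm \<open>x \<in> X\<close> by auto
    show "caputo \<mu> (poly d) x = 0" unfolding d_def caputo_diff[OF xx k d1 d2] using q1 q2 i
      unfolding birkhoff2_def by auto
  qed
  have "(pderiv ^^ 2) d = 0"
    by (rule caputo_zero_imp[OF k dd _ _ cX xm cz]) (use N X_def in auto)
  then have "degree (pderiv d) = 0" by (simp add: pderiv_eq_0_iff numeral_2_eq_2)
  then have dd1: "degree d \<le> 1" by (simp add: degree_pderiv)
  have pd: "poly d y = coeff d 0 + coeff d 1 * y" for y
  proof -
    have "poly d y = (\<Sum>i\<le>1. coeff d i * y ^ i)"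
      unfolding poly_altdef by (rule sum.mono_neutral_left) (use dd1 in \<open>auto intro: coeff_eq_0\<close>)
    then show ?thesis by simp
  qed
  have "poly d (-1) = 0" "poly d 1 = 0" using q1 q2 unfolding d_def birkhoff2_def by auto
  then have c01: "coeff d 0 = 0" "coeff d 1 = 0" using pd[of "-1"] pd[of 1] by auto
  have "d = 0"
  proof (rule poly_eqI)
    fix n show "coeff d n = coeff 0 n"
      using c01 dd1 by (cases n; cases "n - 1") (auto intro: coeff_eq_0)
  qed
  then show ?thesis unfolding d_def by simp
qed




definition Aint :: "nat \<Rightarrow> real poly" where
  "Aint l = pint (jp 0 0 l) - [:poly (pint (jp 0 0 l)) (-1):]"

lemma pderiv_Aint: "pderiv (Aint l) = jp 0 0 l"
  unfolding Aint_def by (simp add: pderiv_diff pderiv_pint pderiv_pCons)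

lemma Aint_m1: "poly (Aint l) (-1) = 0"
  unfolding Aint_def by simp

lemma Aint_integral: "x \<ge> -1 \<Longrightarrow> poly (Aint l) x = integral {-1..x} (legendre l)"
  unfolding Aint_def legendre_def jacobi_poly by (simp add: integral_poly_eq)

lemma degree_Aint: "degree (Aint l) \<le> l + 1"
proof -
  have "degree (pint (jp 0 0 l)) \<le> l + 1" using degree_pint[of "jp 0 0 l"] degree_jp[of 0 0 l] by simp
  then show ?thesis unfolding Aint_def by (intro degree_diff_le) auto
qed

lemma caputo1_sum:
  assumes x: "x > -1" and mu: "0 < \<mu>" "\<mu> < 1" and fin: "finite L"
  shows "caputo \<mu> (poly (\<Sum>l\<in>L. smult (c l) (Aint l))) x =
     (\<Sum>l\<in>L. c l * (fact l / Gamma (real l + 1 + (1 - \<mu>)) * (1 + x) powr (1 - \<mu>) * jacobi (\<mu> - 1) (1 - \<mu>) l x))"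
proof -
  have kk: "nat \<lceil>\<mu>\<rceil> = 1" using mu by linarith
  have "caputo \<mu> (poly (\<Sum>l\<in>L. smult (c l) (Aint l))) x =
      frac_int (1 - \<mu>) (poly (\<Sum>l\<in>L. smult (c l) (jp 0 0 l))) x"
    unfolding caputo_def Let_def kk deriv_funpow_poly
    by (simp add: pderiv_sum' pderiv_smult pderiv_Aint)
  also have "\<dots> = (\<Sum>l\<in>L. c l * frac_int (1 - \<mu>) (poly (jp 0 0 l)) x)"
    by (rule frac_int_poly_sum[OF x _ fin]) (use mu in auto)
  also have "\<dots> = (\<Sum>l\<in>L. c l * (fact l / Gamma (real l + 1 + (1 - \<mu>)) * (1 + x) powr (1 - \<mu>) * jacobi (\<mu> - 1) (1 - \<mu>) l x))"
    using bateman[OF x, of "1 - \<mu>"] mu unfolding legendre_def jacobi_poly by simp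
  finally show ?thesis .
qed

lemma conn_swap:
  assumes al: "al > -1" and be: "be > -1" and a: "a > -1" and b: "b > -1"
  shows "(\<Sum>l\<le>M. (\<Sum>n=l..M. conn_coeff al be a b l n * xi n) * jacobi a b l x) =
         (\<Sum>n\<le>M. xi n * jacobi al be n x)"
proof -
  let ?C = "conn_coeff al be a b"
  have z: "?C l n = 0" if "l > n" for l n using conn_coeff_char(2)[OF al be a b that] .
  have "(\<Sum>l\<le>M. (\<Sum>n=l..M. ?C l n * xi n) * jacobi a b l x) =
        (\<Sum>l\<le>M. \<Sum>n\<le>M. ?C l n * xi n * jacobi a b l x)"
  proof (intro sum.cong refl)
    fix l assume l: "l \<in> {..M}"
    have "(\<Sum>n=l..M. ?C l n * xi n) = (\<Sum>n\<le>M. ?C l n * xi n)"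
      by (rule sum.mono_neutral_left) (auto simp: z)
    then show "(\<Sum>n=l..M. ?C l n * xi n) * jacobi a b l x = (\<Sum>n\<le>M. ?C l n * xi n * jacobi a b l x)"
      by (simp add: sum_distrib_right)
  qed
  also have "\<dots> = (\<Sum>n\<le>M. \<Sum>l\<le>M. ?C l n * xi n * jacobi a b l x)" by (rule sum.swap)
  also have "\<dots> = (\<Sum>n\<le>M. xi n * jacobi al be n x)"
  proof (intro sum.cong refl)
    fix n assume n: "n \<in> {..M}"
    have "(\<Sum>l\<le>M. ?C l n * xi n * jacobi a b l x) = xi n * (\<Sum>l\<le>M. ?C l n * jacobi a b l x)"
      by (simp add: sum_distrib_left mult_ac)
    also have "(\<Sum>l\<le>M. ?C l n * jacobi a b l x) = (\<Sum>l\<le>n. ?C l n * jacobi a b l x)"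
      using n by (intro sum.mono_neutral_right) (auto simp: z)
    also have "\<dots> = jacobi al be n x" using conn_coeff_char(1)[OF al be a b] by simp
    finally show "(\<Sum>l\<le>M. ?C l n * xi n * jacobi a b l x) = xi n * jacobi al be n x" .
  qed
  finally show ?thesis .
qed

lemma Lq_split1:
  assumes j: "j \<in> {1..N}" and vals: "\<forall>i\<in>{1..N}. poly p (xs i) = (if i = j then 1 else 0)"
  shows "Lq N xs w (p * q) = poly p (xs 0) * poly q (xs 0) * w 0 + poly q (xs j) * w j"
proof -
  have "Lq N xs w (p * q) = (\<Sum>k\<le>N. poly p (xs k) * poly q (xs k) * w k)" unfolding Lq_def by simp
  also have "\<dots> = poly p (xs 0) * poly q (xs 0) * w 0 + (\<Sum>k\<in>{1..N}. poly p (xs k) * poly q (xs k) * w k)"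
  proof -
    have "{..N} = insert 0 {1..N}" by auto
    then show ?thesis by simp
  qed
  also have "(\<Sum>k\<in>{1..N}. poly p (xs k) * poly q (xs k) * w k) = poly q (xs j) * w j"
  proof -
    have "(\<Sum>k\<in>{1..N}. poly p (xs k) * poly q (xs k) * w k) = (\<Sum>k\<in>{1..N}. if k = j then poly q (xs k) * w k else 0)"
      using vals by (intro sum.cong refl) auto
    also have "\<dots> = poly q (xs j) * w j" using j by (simp add: sum.delta)
    finally show ?thesis .
  qed
  finally show ?thesis .
qed

lemma Lq_split2:
  assumes N: "N \<ge> 2" and j: "j \<in> {1..N-1}" and vals: "\<forall>i\<in>{1..N-1}. poly p (xs i) = (if i = j then 1 else 0)"
  shows "Lq N xs w (p * q) = poly p (xs 0) * poly q (xs 0) * w 0 + poly p (xs N) * poly q (xs N) * w N + poly q (xs j) * w j"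
proof -
  have "Lq N xs w (p * q) = (\<Sum>k\<le>N. poly p (xs k) * poly q (xs k) * w k)" unfolding Lq_def by simp
  also have "\<dots> = poly p (xs 0) * poly q (xs 0) * w 0 + (poly p (xs N) * poly q (xs N) * w N +
      (\<Sum>k\<in>{1..N-1}. poly p (xs k) * poly q (xs k) * w k))"
  proof -
    have "{..N} = insert 0 (insert N {1..N-1})" using N by auto
    then show ?thesis using N by simp
  qed
  also have "(\<Sum>k\<in>{1..N-1}. poly p (xs k) * poly q (xs k) * w k) = poly q (xs j) * w j"
  proof -
    have "(\<Sum>k\<in>{1..N-1}. poly p (xs k) * poly q (xs k) * w k) = (\<Sum>k\<in>{1..N-1}. if k = j then poly q (xs k) * w k else 0)"
      using vals by (intro sum.cong refl) auto
    also have "\<dots> = poly q (xs j) * w j" using j by (simp add: sum.delta)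
    finally show ?thesis .
  qed
  finally show ?thesis by simp
qed

lemma case1:
  fixes N :: nat and al be \<mu> :: real and xs w :: "nat \<Rightarrow> real"
  assumes N: "N \<ge> 2" and al: "al > -1" and be: "be > -1"
    and jgl: "JGL al be N xs w" and j: "j \<in> {1..N}" and mu: "0 < \<mu>" "\<mu> < 1"
  shows "(\<exists>!q. birkhoff1 \<mu> N xs j q) \<and>
      (\<forall>q. birkhoff1 \<mu> N xs j q \<longrightarrow> (\<forall>x\<in>{-1..1}.
         poly q x =
           1 / (1 + xs j) powr (1 - \<mu>) *
           (\<Sum>l\<le>N-1. Gamma (real l - \<mu> + 2) / fact l *
              (\<Sum>n=l..N-1. conn_coeff al be (\<mu> - 1) (1 - \<mu>) l n *
                 (1 / jacobi_gamma al be n *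
                   (- (if j = N then al + 1 else 1) / (be + 1)
                        * jacobi al be N (-1) / jacobi al be N (xs j)
                        * jacobi al be n (-1) * w 0
                    + jacobi al be n (xs j) * w j)))
              * integral {-1..x} (legendre l))))"
proof -
  obtain p where p: "degree p \<le> N - 1" "\<forall>i\<in>{1..N}. poly p (xs i) = (if i = j then 1 else 0)"
     "poly p (-1) = - (if j = N then al + 1 else 1) / (be + 1) * jacobi al be N (-1) / jacobi al be N (xs j)"
    using pj1[OF jgl N al be j] by blast
  define xi where "xi = (\<lambda>n. 1 / jacobi_gamma al be n *
                   (- (if j = N then al + 1 else 1) / (be + 1)
                        * jacobi al be N (-1) / jacobi al be N (xs j)
                        * jacobi al be n (-1) * w 0
                    + jacobi al be n (xs j) * w j))"
  have xi_eq: "xi n = 1 / jacobi_gamma al be n * Lq N xs w (p * jp al be n)" for n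
  proof -
    have "Lq N xs w (p * jp al be n) = poly p (xs 0) * poly (jp al be n) (xs 0) * w 0 + poly (jp al be n) (xs j) * w j"
      by (rule Lq_split1[OF j p(2)])
    then show ?thesis unfolding xi_def using node_facts(1)[OF jgl] p(3) by (simp add: poly_jp)
  qed
  have S: "(\<Sum>n\<le>N-1. xi n * jacobi al be n x) = poly p x" for x
    unfolding xi_eq by (rule discrete_expand[OF jgl al be _ p(1)]) (use N in auto)
  define br where "br = (\<lambda>l. \<Sum>n=l..N-1. conn_coeff al be (\<mu> - 1) (1 - \<mu>) l n * xi n)"
  have a1: "\<mu> - 1 > -1" and b1: "1 - \<mu> > -1" using mu by auto
  have S2: "(\<Sum>l\<le>N-1. br l * jacobi (\<mu> - 1) (1 - \<mu>) l x) = poly p x" for x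
    unfolding br_def conn_swap[OF al be a1 b1] S ..
  define \<kappa> where "\<kappa> = 1 / (1 + xs j) powr (1 - \<mu>)"
  define c where "c = (\<lambda>l. \<kappa> * (Gamma (real l - \<mu> + 2) / fact l * br l))"
  define F where "F = (\<Sum>l\<le>N-1. smult (c l) (Aint l))"
  have xjm: "xs j > -1" using node_facts(3)[OF jgl, of 0 j] node_facts(1)[OF jgl] j by auto
  have degF: "degree F \<le> N"
    unfolding F_def
  proof (rule degree_sum_le)
    fix l assume "l \<in> {..N-1}"
    then have "degree (Aint l) \<le> N" using degree_Aint[of l] N by auto
    then show "degree (smult (c l) (Aint l)) \<le> N" by (meson degree_smult_le le_trans)
  qed simp
  have Fm1: "poly F (-1) = 0" unfolding F_def by (simp add: poly_sum Aint_m1)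
  have capF: "caputo \<mu> (poly F) x = \<kappa> * (1 + x) powr (1 - \<mu>) * poly p x" if x: "x > -1" for x
  proof -
    have "caputo \<mu> (poly F) x = (\<Sum>l\<le>N-1. c l * (fact l / Gamma (real l + 1 + (1 - \<mu>)) * (1 + x) powr (1 - \<mu>) * jacobi (\<mu> - 1) (1 - \<mu>) l x))"
      unfolding F_def by (rule caputo1_sum[OF x mu]) simp
    also have "\<dots> = (\<Sum>l\<le>N-1. \<kappa> * (1 + x) powr (1 - \<mu>) * (br l * jacobi (\<mu> - 1) (1 - \<mu>) l x))"
    proof (intro sum.cong refl)
      fix l
      have g: "Gamma (real l - \<mu> + 2) = Gamma (real l + 1 + (1 - \<mu>))" by (simp add: algebra_simps)
      have gp: "Gamma (real l + 1 + (1 - \<mu>)) > 0" using mu by auto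
      show "c l * (fact l / Gamma (real l + 1 + (1 - \<mu>)) * (1 + x) powr (1 - \<mu>) * jacobi (\<mu> - 1) (1 - \<mu>) l x) =
          \<kappa> * (1 + x) powr (1 - \<mu>) * (br l * jacobi (\<mu> - 1) (1 - \<mu>) l x)"
        unfolding c_def g using gp by (simp add: field_simps)
    qed
    also have "\<dots> = \<kappa> * (1 + x) powr (1 - \<mu>) * poly p x"
      unfolding sum_distrib_left[symmetric] S2 ..
    finally show ?thesis .
  qed
  have bF: "birkhoff1 \<mu> N xs j F"
    unfolding birkhoff1_def
  proof (intro conjI ballI degF Fm1)
    fix i assume i: "i \<in> {1..N}"
    have xim: "xs i > -1" using node_facts(3)[OF jgl, of 0 i] node_facts(1)[OF jgl] i by auto
    show "caputo \<mu> (poly F) (xs i) = (if i = j then 1 else 0)"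
      unfolding capF[OF xim] using p(2) i xjm unfolding \<kappa>_def by auto
  qed
  have uniq: "\<And>q. birkhoff1 \<mu> N xs j q \<Longrightarrow> q = F"
    using birkhoff1_unique[OF jgl N mu _ bF] by blast
  show ?thesis
  proof (intro conjI allI impI ballI)
    show "\<exists>!q. birkhoff1 \<mu> N xs j q" using bF uniq by blast
  next
    fix q x assume q: "birkhoff1 \<mu> N xs j q" and x: "x \<in> {-1..1::real}"
    have "poly q x = poly F x" using uniq[OF q] by simp
    also have "\<dots> = (\<Sum>l\<le>N-1. c l * integral {-1..x} (legendre l))"
      unfolding F_def using x by (simp add: poly_sum Aint_integral)
    finally show "poly q x = 1 / (1 + xs j) powr (1 - \<mu>) *
           (\<Sum>l\<le>N-1. Gamma (real l - \<mu> + 2) / fact l *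
              (\<Sum>n=l..N-1. conn_coeff al be (\<mu> - 1) (1 - \<mu>) l n *
                 (1 / jacobi_gamma al be n *
                   (- (if j = N then al + 1 else 1) / (be + 1)
                        * jacobi al be N (-1) / jacobi al be N (xs j)
                        * jacobi al be n (-1) * w 0
                    + jacobi al be n (xs j) * w j)))
              * integral {-1..x} (legendre l))"
      unfolding c_def br_def xi_def \<kappa>_def by (simp add: sum_distrib_left mult_ac)
  qed
qed

definition Ag :: "real poly \<Rightarrow> real poly" where
  "Ag q = pint q - [:poly (pint q) (-1):]"

lemma pderiv_Ag: "pderiv (Ag q) = q"
  unfolding Ag_def by (simp add: pderiv_diff pderiv_pint pderiv_pCons)

lemma Ag_m1: "poly (Ag q) (-1) = 0"
  unfolding Ag_def by simp

lemma Ag_integral: "x \<ge> -1 \<Longrightarrow> poly (Ag q) x = integral {-1..x} (poly q)"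
  unfolding Ag_def by (simp add: integral_poly_eq)

lemma degree_Ag: "degree (Ag q) \<le> degree q + 1"
proof -
  have "degree (pint q) \<le> degree q + 1" by (rule degree_pint)
  then show ?thesis unfolding Ag_def by (intro degree_diff_le) auto
qed

lemma poly_integrable: "(poly q) integrable_on {a..b::real}"
proof (cases "a \<le> b")
  case True then show ?thesis using integral_poly[OF True] by blast
next
  case False then show ?thesis by (simp add: integrable_on_empty)
qed

definition Phi :: "nat \<Rightarrow> real poly" where
  "Phi l = smult (integral {-1..1} (\<lambda>t. (t - 1) * legendre l t) / 2) [:1, 1:]
     + [:0, 1:] * Ag (jp 0 0 l) - Ag ([:0, 1:] * jp 0 0 l)"

lemma pderiv2_Phi: "pderiv (pderiv (Phi l)) = jp 0 0 l"
  unfolding Phi_def by (simp add: pderiv_add pderiv_diff pderiv_mult pderiv_Ag pderiv_pCons pderiv_smult)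

lemma Phi_m1: "poly (Phi l) (-1) = 0"
  unfolding Phi_def by (simp add: Ag_m1)

lemma Phi_p1: "poly (Phi l) 1 = 0"
proof -
  have e: "integral {-1..1} (\<lambda>t. (t - 1) * legendre l t) =
     integral {-1..1} (poly ([:0, 1:] * jp 0 0 l)) - integral {-1..1} (poly (jp 0 0 l))"
  proof -
    have "integral {-1..1} (\<lambda>t. (t - 1) * legendre l t) =
        integral {-1..1} (\<lambda>t. poly ([:0, 1:] * jp 0 0 l) t - poly (jp 0 0 l) t)"
      unfolding legendre_def jacobi_poly by (simp add: algebra_simps)
    also have "\<dots> = integral {-1..1} (poly ([:0, 1:] * jp 0 0 l)) - integral {-1..1} (poly (jp 0 0 l))"
      by (rule integral_diff) (rule poly_integrable)+
    finally show ?thesis .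
  qed
  show ?thesis unfolding Phi_def using Ag_integral[of 1] by (simp add: e)
qed

lemma Phi_integral:
  assumes x: "x \<in> {-1..1}"
  shows "poly (Phi l) x = (1 + x) / 2 * integral {-1..1} (\<lambda>t. (t - 1) * legendre l t)
                 + integral {-1..x} (\<lambda>t. (x - t) * legendre l t)"
proof -
  have "integral {-1..x} (\<lambda>t. (x - t) * legendre l t) =
      integral {-1..x} (\<lambda>t. x * poly (jp 0 0 l) t - poly ([:0, 1:] * jp 0 0 l) t)"
    unfolding legendre_def jacobi_poly by (simp add: algebra_simps)
  also have "\<dots> = integral {-1..x} (\<lambda>t. x * poly (jp 0 0 l) t) - integral {-1..x} (poly ([:0, 1:] * jp 0 0 l))"
    by (rule integral_diff, rule integrable_on_mult_right, rule poly_integrable, rule poly_integrable)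
  also have "\<dots> = x * poly (Ag (jp 0 0 l)) x - poly (Ag ([:0, 1:] * jp 0 0 l)) x"
    using x by (simp add: Ag_integral)
  finally have e: "integral {-1..x} (\<lambda>t. (x - t) * legendre l t) =
     x * poly (Ag (jp 0 0 l)) x - poly (Ag ([:0, 1:] * jp 0 0 l)) x" .
  show ?thesis unfolding e Phi_def by (simp add: algebra_simps)
qed

lemma degree_Phi: "degree (Phi l) \<le> l + 2"
proof -
  have d1: "degree (Ag (jp 0 0 l)) \<le> l + 1" using degree_Ag[of "jp 0 0 l"] degree_jp[of 0 0 l] by simp
  have d2: "degree (Ag ([:0, 1:] * jp 0 0 l)) \<le> l + 2"
  proof -
    have "degree ([:0, 1::real:] * jp 0 0 l) \<le> l + 1"
      using degree_mult_le[of "[:0, 1::real:]" "jp 0 0 l"] degree_jp[of 0 0 l] by simp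
    then show ?thesis using degree_Ag[of "[:0, 1:] * jp 0 0 l"] by simp
  qed
  have d3: "degree ([:0, 1::real:] * Ag (jp 0 0 l)) \<le> l + 2"
    using degree_mult_le[of "[:0, 1::real:]" "Ag (jp 0 0 l)"] d1 by simp
  have d4: "degree (smult (integral {-1..1} (\<lambda>t. (t - 1) * legendre l t) / 2) [:1, 1::real:]) \<le> l + 2"
    by (rule order_trans[OF degree_smult_le]) simp
  show ?thesis unfolding Phi_def
    by (intro degree_diff_le degree_add_le d2 d3 d4)
qed

lemma caputo2_sum:
  assumes x: "x > -1" and mu: "1 < \<mu>" "\<mu> < 2" and fin: "finite L"
  shows "caputo \<mu> (poly (\<Sum>l\<in>L. smult (c l) (Phi l))) x =
     (\<Sum>l\<in>L. c l * (fact l / Gamma (real l + 1 + (2 - \<mu>)) * (1 + x) powr (2 - \<mu>) * jacobi (- (2 - \<mu>)) (2 - \<mu>) l x))"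
proof -
  have kk: "nat \<lceil>\<mu>\<rceil> = 2" using mu by linarith
  have "caputo \<mu> (poly (\<Sum>l\<in>L. smult (c l) (Phi l))) x =
      frac_int (2 - \<mu>) (poly (\<Sum>l\<in>L. smult (c l) (jp 0 0 l))) x"
    unfolding caputo_def Let_def kk deriv_funpow_poly
    by (simp add: numeral_2_eq_2 pderiv_sum' pderiv_smult pderiv2_Phi)
  also have "\<dots> = (\<Sum>l\<in>L. c l * frac_int (2 - \<mu>) (poly (jp 0 0 l)) x)"
    by (rule frac_int_poly_sum[OF x _ fin]) (use mu in auto)
  also have "\<dots> = (\<Sum>l\<in>L. c l * (fact l / Gamma (real l + 1 + (2 - \<mu>)) * (1 + x) powr (2 - \<mu>) * jacobi (- (2 - \<mu>)) (2 - \<mu>) l x))"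
    using bateman[OF x, of "2 - \<mu>"] mu unfolding legendre_def jacobi_poly by simp
  finally show ?thesis .
qed

lemma case2:
  fixes N :: nat and al be \<mu> :: real and xs w :: "nat \<Rightarrow> real"
  assumes N: "N \<ge> 2" and al: "al > -1" and be: "be > -1"
    and jgl: "JGL al be N xs w" and j: "j \<in> {1..N-1}" and mu: "1 < \<mu>" "\<mu> < 2"
  shows "(\<exists>!q. birkhoff2 \<mu> N xs j q) \<and>
      (\<forall>q. birkhoff2 \<mu> N xs j q \<longrightarrow> (\<forall>x\<in>{-1..1}.
         poly q x =
           1 / (1 + xs j) powr (2 - \<mu>) *
           (\<Sum>l\<le>N-2. Gamma (real l - \<mu> + 3) / fact l *
              (\<Sum>n=l..N-2. conn_coeff al be (\<mu> - 2) (2 - \<mu>) l n *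
                 (1 / jacobi_gamma al be n *
                   ((xs j - 1) * jacobi al be N (-1) / (2 * (be + 1) * jacobi al be N (xs j))
                        * jacobi al be n (-1) * w 0
                    - (1 + xs j) * jacobi al be N 1 / (2 * (al + 1) * jacobi al be N (xs j))
                        * jacobi al be n 1 * w N
                    + jacobi al be n (xs j) * w j)))
              * ((1 + x) / 2 * integral {-1..1} (\<lambda>t. (t - 1) * legendre l t)
                 + integral {-1..x} (\<lambda>t. (x - t) * legendre l t)))))"
proof -
  obtain p where p: "degree p \<le> N - 2" "\<forall>i\<in>{1..N-1}. poly p (xs i) = (if i = j then 1 else 0)"
     "poly p (-1) = (xs j - 1) * jacobi al be N (-1) / (2 * (be + 1) * jacobi al be N (xs j))"
     "poly p 1 = - ((1 + xs j) * jacobi al be N 1 / (2 * (al + 1) * jacobi al be N (xs j)))"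
    using pj2[OF jgl N al be j] by blast
  define xi where "xi = (\<lambda>n. 1 / jacobi_gamma al be n *
                   ((xs j - 1) * jacobi al be N (-1) / (2 * (be + 1) * jacobi al be N (xs j))
                        * jacobi al be n (-1) * w 0
                    - (1 + xs j) * jacobi al be N 1 / (2 * (al + 1) * jacobi al be N (xs j))
                        * jacobi al be n 1 * w N
                    + jacobi al be n (xs j) * w j))"
  have xi_eq: "xi n = 1 / jacobi_gamma al be n * Lq N xs w (p * jp al be n)" for n
  proof -
    have "Lq N xs w (p * jp al be n) = poly p (xs 0) * poly (jp al be n) (xs 0) * w 0 +
        poly p (xs N) * poly (jp al be n) (xs N) * w N + poly (jp al be n) (xs j) * w j"
      by (rule Lq_split2[OF N j p(2)])
    then show ?thesis unfolding xi_def using node_facts(1,2)[OF jgl] p(3,4) by (simp add: poly_jp)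
  qed
  have S: "(\<Sum>n\<le>N-2. xi n * jacobi al be n x) = poly p x" for x
    unfolding xi_eq by (rule discrete_expand[OF jgl al be _ p(1)]) (use N in auto)
  define br where "br = (\<lambda>l. \<Sum>n=l..N-2. conn_coeff al be (\<mu> - 2) (2 - \<mu>) l n * xi n)"
  have a1: "\<mu> - 2 > -1" and b1: "2 - \<mu> > -1" using mu by auto
  have S2: "(\<Sum>l\<le>N-2. br l * jacobi (\<mu> - 2) (2 - \<mu>) l x) = poly p x" for x
    unfolding br_def conn_swap[OF al be a1 b1] S ..
  define \<kappa> where "\<kappa> = 1 / (1 + xs j) powr (2 - \<mu>)"
  define c where "c = (\<lambda>l. \<kappa> * (Gamma (real l - \<mu> + 3) / fact l * br l))"
  define F where "F = (\<Sum>l\<le>N-2. smult (c l) (Phi l))"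
  have xjm: "xs j > -1" using node_facts(3)[OF jgl, of 0 j] node_facts(1)[OF jgl] j by auto
  have degF: "degree F \<le> N"
    unfolding F_def
  proof (rule degree_sum_le)
    fix l assume "l \<in> {..N-2}"
    then have "degree (Phi l) \<le> N" using degree_Phi[of l] N by auto
    then show "degree (smult (c l) (Phi l)) \<le> N" by (meson degree_smult_le le_trans)
  qed simp
  have Fm1: "poly F (-1) = 0" unfolding F_def by (simp add: poly_sum Phi_m1)
  have Fp1: "poly F 1 = 0" unfolding F_def by (simp add: poly_sum Phi_p1)
  have capF: "caputo \<mu> (poly F) x = \<kappa> * (1 + x) powr (2 - \<mu>) * poly p x" if x: "x > -1" for x
  proof -
    have "caputo \<mu> (poly F) x = (\<Sum>l\<le>N-2. c l * (fact l / Gamma (real l + 1 + (2 - \<mu>)) * (1 + x) powr (2 - \<mu>) * jacobi (- (2 - \<mu>)) (2 - \<mu>) l x))"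
      unfolding F_def by (rule caputo2_sum[OF x mu]) simp
    also have "\<dots> = (\<Sum>l\<le>N-2. \<kappa> * (1 + x) powr (2 - \<mu>) * (br l * jacobi (\<mu> - 2) (2 - \<mu>) l x))"
    proof (intro sum.cong refl)
      fix l
      have g: "Gamma (real l - \<mu> + 3) = Gamma (real l + 1 + (2 - \<mu>))" by (simp add: algebra_simps)
      have gp: "Gamma (real l + 1 + (2 - \<mu>)) > 0" using mu by auto
      show "c l * (fact l / Gamma (real l + 1 + (2 - \<mu>)) * (1 + x) powr (2 - \<mu>) * jacobi (- (2 - \<mu>)) (2 - \<mu>) l x) =
          \<kappa> * (1 + x) powr (2 - \<mu>) * (br l * jacobi (\<mu> - 2) (2 - \<mu>) l x)"
        unfolding c_def g using gp by (simp add: field_simps)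
    qed
    also have "\<dots> = \<kappa> * (1 + x) powr (2 - \<mu>) * poly p x"
      unfolding sum_distrib_left[symmetric] S2 ..
    finally show ?thesis .
  qed
  have bF: "birkhoff2 \<mu> N xs j F"
    unfolding birkhoff2_def
  proof (intro conjI ballI degF Fm1 Fp1)
    fix i assume i: "i \<in> {1..N-1}"
    have xim: "xs i > -1" using node_facts(3)[OF jgl, of 0 i] node_facts(1)[OF jgl] i by auto
    show "caputo \<mu> (poly F) (xs i) = (if i = j then 1 else 0)"
      unfolding capF[OF xim] using p(2) i xjm unfolding \<kappa>_def by auto
  qed
  have uniq: "\<And>q. birkhoff2 \<mu> N xs j q \<Longrightarrow> q = F"
    using birkhoff2_unique[OF jgl N mu _ bF] by blast
  show ?thesis
  proof (intro conjI allI impI ballI)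
    show "\<exists>!q. birkhoff2 \<mu> N xs j q" using bF uniq by blast
  next
    fix q x assume q: "birkhoff2 \<mu> N xs j q" and x: "x \<in> {-1..1::real}"
    have "poly q x = poly F x" using uniq[OF q] by simp
    also have "\<dots> = (\<Sum>l\<le>N-2. c l * ((1 + x) / 2 * integral {-1..1} (\<lambda>t. (t - 1) * legendre l t)
                 + integral {-1..x} (\<lambda>t. (x - t) * legendre l t)))"
      unfolding F_def using x by (simp add: poly_sum Phi_integral)
    finally show "poly q x =
           1 / (1 + xs j) powr (2 - \<mu>) *
           (\<Sum>l\<le>N-2. Gamma (real l - \<mu> + 3) / fact l *
              (\<Sum>n=l..N-2. conn_coeff al be (\<mu> - 2) (2 - \<mu>) l n *
                 (1 / jacobi_gamma al be n *
                   ((xs j - 1) * jacobi al be N (-1) / (2 * (be + 1) * jacobi al be N (xs j))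
                        * jacobi al be n (-1) * w 0
                    - (1 + xs j) * jacobi al be N 1 / (2 * (al + 1) * jacobi al be N (xs j))
                        * jacobi al be n 1 * w N
                    + jacobi al be n (xs j) * w j)))
              * ((1 + x) / 2 * integral {-1..1} (\<lambda>t. (t - 1) * legendre l t)
                 + integral {-1..x} (\<lambda>t. (x - t) * legendre l t)))"
      unfolding c_def br_def xi_def \<kappa>_def by (simp add: sum_distrib_left mult_ac)
  qed
qed



theorem theorem4p2:
  fixes N :: nat and al be \<mu> :: real and xs w :: "nat \<Rightarrow> real"
  assumes N: "N \<ge> 2" and al: "al > -1" and be: "be > -1"
    and jgl: "JGL al be N xs w"
  shows
   "(\<forall>j\<in>{1..N}. 0 < \<mu> \<and> \<mu> < 1 \<longrightarrow>
      (\<exists>!q. birkhoff1 \<mu> N xs j q) \<and>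
      (\<forall>q. birkhoff1 \<mu> N xs j q \<longrightarrow> (\<forall>x\<in>{-1..1}.
         poly q x =
           1 / (1 + xs j) powr (1 - \<mu>) *
           (\<Sum>l\<le>N-1. Gamma (real l - \<mu> + 2) / fact l *
              (\<Sum>n=l..N-1. conn_coeff al be (\<mu> - 1) (1 - \<mu>) l n *
                 (1 / jacobi_gamma al be n *
                   (- (if j = N then al + 1 else 1) / (be + 1)
                        * jacobi al be N (-1) / jacobi al be N (xs j)
                        * jacobi al be n (-1) * w 0
                    + jacobi al be n (xs j) * w j)))
              * integral {-1..x} (legendre l))))) \<and>
    (\<forall>j\<in>{1..N-1}. 1 < \<mu> \<and> \<mu> < 2 \<longrightarrow>
      (\<exists>!q. birkhoff2 \<mu> N xs j q) \<and>
      (\<forall>q. birkhoff2 \<mu> N xs j q \<longrightarrow> (\<forall>x\<in>{-1..1}.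
         poly q x =
           1 / (1 + xs j) powr (2 - \<mu>) *
           (\<Sum>l\<le>N-2. Gamma (real l - \<mu> + 3) / fact l *
              (\<Sum>n=l..N-2. conn_coeff al be (\<mu> - 2) (2 - \<mu>) l n *
                 (1 / jacobi_gamma al be n *
                   ((xs j - 1) * jacobi al be N (-1) / (2 * (be + 1) * jacobi al be N (xs j))
                        * jacobi al be n (-1) * w 0
                    - (1 + xs j) * jacobi al be N 1 / (2 * (al + 1) * jacobi al be N (xs j))
                        * jacobi al be n 1 * w N
                    + jacobi al be n (xs j) * w j)))
              * ((1 + x) / 2 * integral {-1..1} (\<lambda>t. (t - 1) * legendre l t)
                 + integral {-1..x} (\<lambda>t. (x - t) * legendre l t))))))"
  using case1[OF N al be jgl] case2[OF N al be jgl] by blast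

end
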